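(* Suppose (i) $G$ is a continuous distribution on $[0,\bar v]$ with density bounded below by some constant $L>0$, and (ii) for every $\lambda>0$, the set $\{v\in(0,\bar v]: r(v)/c(v)\ne\lambda\}$ has positive probability under $F$. If $\mathbb E_{v\sim F,p\sim G}[p\mathbf 1[v\ge p]]>\rho$, then \[\mathbb E_{\bm v,\bm p}\big[R^{\mathrm{pac}}(\bm v,\bm p)\big]-\mathbb E_{\bm v,\bm p,\bm\gamma}\big[R^{\mathrm{thr}}(\bm v,\bm p,\bm\gamma)\big]=\Theta(T).\]
   Context: Model: constants $\bar v>0$, $\rho\in(0,\bar v]$; $T$ rounds; budget $B=\rho T$. Values $v_t$ i.i.d. from $F$ on $[0,\bar v]$; highest competing bids $p_t$ i.i.d. from $G$ on $[0,\bar v]$, independent of values, unknown to the buyer. $r(v)=\mathbb E_{p\sim G}[(v-p)^+]$, $c(v)=\mathbb E_{p\sim G}[p\mathbf 1[v\ge p]]$. Throttling: each round the buyer chooses $x_t\in\{0,1\}$ after seeing $v_t$, receiving $x_t(v_t-p_t)^+$ and paying $x_tp_t\mathbf 1[v_t\ge p_t]$; an online throttling strategy sets $x_t=\beta_t(\mathcal H_t,v_t,\gamma_t)$ with internal randomness $\gamma_t$ and history of past values, decisions and observed competing bids (full information: all past $p_\tau$; partial information: $p_\tau$ only when $x_\tau=1$), keeping total payment within $B$; revenue $\sum_{t=1}^{T_0}x_t(v_t-p_t)^+$. $R^{\mathrm{thr}}$ is the revenue of the throttling strategy maximizing expected total revenue (expectation over $\bm v,\bm p,\bm\gamma$), under full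 or partial information. Pacing: $R^{\mathrm{pac}}$ is the revenue of the adaptive pacing strategy of Balseiro and Gur (2019): with step size $\varepsilon$ of order $T^{-1/2}$, multiplier cap $\bar\mu\ge\bar v/\rho$, initial $\mu_1\in[0,\bar\mu]$ and $\tilde B_1=B$, in each round it bids $b_t=\min\{v_t/(1+\mu_t),\tilde B_t\}$ in the second-price auction (winning iff $b_t\ge p_t$, then paying $p_t$ and gaining $v_t-p_t$), observes its expenditure $z_t=p_t\mathbf 1[b_t\ge p_t]$, and updates $\mu_{t+1}=\mathrm{Proj}_{[0,\bar\mu]}(\mu_t-\varepsilon(\rho-z_t))$, $\tilde B_{t+1}=\tilde B_t-z_t$. *)

theory Defs
  imports "HOL-Probability.Probability"
begin

definition rfun :: "real measure \<Rightarrow> real \<Rightarrow> real" where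
  "rfun G v = (\<integral>p. max (v - p) 0 \<partial>G)"

definition cfun :: "real measure \<Rightarrow> real \<Rightarrow> real" where
  "cfun G v = (\<integral>p. (if p \<le> v then p else 0) \<partial>G)"

(* distribution of one round: (value, highest competing bid, internal randomness gamma),
   with gamma uniform on [0,1] and all three independent *)
definition round_measure :: "real measure \<Rightarrow> real measure \<Rightarrow> (real \<times> real \<times> real) measure" where
  "round_measure F G = F \<Otimes>\<^sub>M (G \<Otimes>\<^sub>M uniform_measure lborel {0..1::real})"

definition rounds :: "real measure \<Rightarrow> real measure \<Rightarrow> nat \<Rightarrow> (nat \<Rightarrow> real \<times> real \<times> real) measure" where
  "rounds F G T = PiM {..<T} (\<lambda>_. round_measure F G)"

definition vals :: "(nat \<Rightarrow> real \<times> real \<times> real) \<Rightarrow> nat \<Rightarrow> real" where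
  "vals \<omega> t = fst (\<omega> t)"
definition bids :: "(nat \<Rightarrow> real \<times> real \<times> real) \<Rightarrow> nat \<Rightarrow> real" where
  "bids \<omega> t = fst (snd (\<omega> t))"
definition gams :: "(nat \<Rightarrow> real \<times> real \<times> real) \<Rightarrow> nat \<Rightarrow> real" where
  "gams \<omega> t = snd (snd (\<omega> t))"

(* history entry of a past round: (value, decision, observed competing bid or None) *)
type_synonym hist = "(real \<times> bool \<times> real option) list"

(* online throttling strategy: x_t = beta t H_t v_t gamma_t *)
type_synonym strategy = "nat \<Rightarrow> hist \<Rightarrow> real \<Rightarrow> real \<Rightarrow> bool"

(* full = True: full information (all past p observed);
   full = False: partial information (p observed only when x = 1) *)
fun thr_hist :: "bool \<Rightarrow> strategy \<Rightarrow> (nat \<Rightarrow> real) \<Rightarrow> (nat \<Rightarrow> real) \<Rightarrow> (nat \<Rightarrow> real) \<Rightarrow> nat \<Rightarrow> hist" where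
  "thr_hist full \<beta> v p \<gamma> 0 = []"
| "thr_hist full \<beta> v p \<gamma> (Suc t) =
     (let H = thr_hist full \<beta> v p \<gamma> t; x = \<beta> t H (v t) (\<gamma> t)
      in H @ [(v t, x, if full \<or> x then Some (p t) else None)])"

definition thr_x :: "bool \<Rightarrow> strategy \<Rightarrow> (nat \<Rightarrow> real) \<Rightarrow> (nat \<Rightarrow> real) \<Rightarrow> (nat \<Rightarrow> real) \<Rightarrow> nat \<Rightarrow> bool" where
  "thr_x full \<beta> v p \<gamma> t = \<beta> t (thr_hist full \<beta> v p \<gamma> t) (v t) (\<gamma> t)"

definition thr_payment :: "bool \<Rightarrow> strategy \<Rightarrow> (nat \<Rightarrow> real) \<Rightarrow> (nat \<Rightarrow> real) \<Rightarrow> (nat \<Rightarrow> real) \<Rightarrow> nat \<Rightarrow> real" where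
  "thr_payment full \<beta> v p \<gamma> T =
     (\<Sum>t<T. if thr_x full \<beta> v p \<gamma> t \<and> v t \<ge> p t then p t else 0)"

definition thr_revenue :: "bool \<Rightarrow> strategy \<Rightarrow> (nat \<Rightarrow> real) \<Rightarrow> (nat \<Rightarrow> real) \<Rightarrow> (nat \<Rightarrow> real) \<Rightarrow> nat \<Rightarrow> real" where
  "thr_revenue full \<beta> v p \<gamma> T =
     (\<Sum>t<T. if thr_x full \<beta> v p \<gamma> t then max (v t - p t) 0 else 0)"

definition thr_feasible :: "bool \<Rightarrow> strategy \<Rightarrow> real \<Rightarrow> nat \<Rightarrow> bool" where
  "thr_feasible full \<beta> B T = (\<forall>v p \<gamma>. thr_payment full \<beta> v p \<gamma> T \<le> B)"

definition thr_opt :: "bool \<Rightarrow> real measure \<Rightarrow> real measure \<Rightarrow> real \<Rightarrow> nat \<Rightarrow> real" where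
  "thr_opt full F G \<rho> T =
     Sup ((\<lambda>\<beta>. \<integral>\<omega>. thr_revenue full \<beta> (vals \<omega>) (bids \<omega>) (gams \<omega>) T \<partial>rounds F G T)
          ` {\<beta>. thr_feasible full \<beta> (\<rho> * real T) T})"

(* state (mu_t, remaining budget B~_t) at the start of round t *)
fun pac_state :: "real \<Rightarrow> real \<Rightarrow> real \<Rightarrow> real \<Rightarrow> real \<Rightarrow> (nat \<Rightarrow> real) \<Rightarrow> (nat \<Rightarrow> real) \<Rightarrow> nat \<Rightarrow> real \<times> real" where
  "pac_state \<epsilon> \<rho> \<mu>bar \<mu>1 B v p 0 = (\<mu>1, B)"
| "pac_state \<epsilon> \<rho> \<mu>bar \<mu>1 B v p (Suc t) =
     (let (\<mu>, Bt) = pac_state \<epsilon> \<rho> \<mu>bar \<mu>1 B v p t;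
          b = min (v t / (1 + \<mu>)) Bt;
          z = (if b \<ge> p t then p t else 0)
      in (max 0 (min \<mu>bar (\<mu> - \<epsilon> * (\<rho> - z))), Bt - z))"

definition pac_revenue :: "real \<Rightarrow> real \<Rightarrow> real \<Rightarrow> real \<Rightarrow> real \<Rightarrow> (nat \<Rightarrow> real) \<Rightarrow> (nat \<Rightarrow> real) \<Rightarrow> nat \<Rightarrow> real" where
  "pac_revenue \<epsilon> \<rho> \<mu>bar \<mu>1 B v p T =
     (\<Sum>t<T. let (\<mu>, Bt) = pac_state \<epsilon> \<rho> \<mu>bar \<mu>1 B v p t;
                b = min (v t / (1 + \<mu>)) Bt
            in if b \<ge> p t then v t - p t else 0)"

definition pac_exp :: "(nat \<Rightarrow> real) \<Rightarrow> real \<Rightarrow> real \<Rightarrow> real \<Rightarrow> real measure \<Rightarrow> real measure \<Rightarrow> nat \<Rightarrow> real" where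
  "pac_exp eps \<rho> \<mu>bar \<mu>1 F G T =
     (\<integral>\<omega>. pac_revenue (eps T) \<rho> \<mu>bar \<mu>1 (\<rho> * real T) (vals \<omega>) (bids \<omega>) T \<partial>rounds F G T)"

end

theory Submission
  imports Defs
begin

locale setting =
  fixes F G :: "real measure" and vbar \<rho> :: real
  assumes vbar_pos: "vbar > 0" and rho_pos: "0 < \<rho>" and rho_le: "\<rho> \<le> vbar"
    and F_prob: "prob_space F" and F_sets: "sets F = sets borel"
    and F_supp: "measure F {0..vbar} = 1"
    and G_prob: "prob_space G" and G_sets: "sets G = sets borel"
    and G_supp: "measure G {0..vbar} = 1"
begin

abbreviation "U \<equiv> uniform_measure lborel {0..1::real}"
abbreviation "R \<equiv> round_measure F G"

lemma U_prob: "prob_space U"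
  by (rule prob_space_uniform_measure) auto

lemma R_prob: "prob_space R"
  unfolding round_measure_def
  using F_prob G_prob U_prob by (intro prob_space_pair) auto

lemma sets_R: "sets R = sets (borel \<Otimes>\<^sub>M (borel \<Otimes>\<^sub>M borel))"
  unfolding round_measure_def
  by (intro sets_pair_measure_cong F_sets G_sets) auto

lemma space_R: "space R = UNIV"
  using sets_R[THEN sets_eq_imp_space_eq] by (simp add: space_pair_measure)

lemma meas_R_cong[measurable_cong]: "sets R = sets (borel \<Otimes>\<^sub>M (borel \<Otimes>\<^sub>M borel))"
  by (rule sets_R)
lemma meas_F_cong[measurable_cong]: "sets F = sets borel" by (rule F_sets)
lemma meas_G_cong[measurable_cong]: "sets G = sets borel" by (rule G_sets)

lemma F_AE: "AE v in F. v \<in> {0..vbar}"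
proof -
  interpret prob_space F by (rule F_prob)
  show ?thesis
    using F_supp by (intro AE_prob_1) (auto simp: F_sets)
qed

lemma G_AE: "AE p in G. p \<in> {0..vbar}"
proof -
  interpret prob_space G by (rule G_prob)
  show ?thesis
    using G_supp by (intro AE_prob_1) (auto simp: G_sets)
qed

lemma test: "(\<lambda>y. fst y - fst (snd y)) \<in> borel_measurable R"
  by measurable

end

definition hp :: "real \<Rightarrow> real \<Rightarrow> real \<Rightarrow> real" where
  "hp \<mu> v p = max (v - (1 + \<mu>) * p) 0"

context
  fixes \<epsilon> \<rho> \<mu>bar \<mu>1 B vbar :: real and v p :: "nat \<Rightarrow> real" and T :: nat
begin

definition "mu t = fst (pac_state \<epsilon> \<rho> \<mu>bar \<mu>1 B v p t)"
definition "bb t = snd (pac_state \<epsilon> \<rho> \<mu>bar \<mu>1 B v p t)"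
definition "bid t = min (v t / (1 + mu t)) (bb t)"
definition "zz t = (if bid t \<ge> p t then p t else 0)"

lemma mu0: "mu 0 = \<mu>1" and bb0: "bb 0 = B"
  by (simp_all add: mu_def bb_def)

lemma st_Suc: "mu (Suc t) = max 0 (min \<mu>bar (mu t - \<epsilon> * (\<rho> - zz t)))"
  "bb (Suc t) = bb t - zz t"
  by (simp_all add: mu_def bb_def zz_def bid_def Let_def split_beta)

lemma rev_eq: "pac_revenue \<epsilon> \<rho> \<mu>bar \<mu>1 B v p T = (\<Sum>t<T. if bid t \<ge> p t then v t - p t else 0)"
  unfolding pac_revenue_def by (simp add: mu_def bb_def bid_def Let_def split_beta)

lemma bb_eq: "bb n = B - (\<Sum>t<n. zz t)"
  by (induction n) (simp_all add: bb0 st_Suc)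

context
  assumes vp: "\<forall>t<T. v t \<in> {0..vbar} \<and> p t \<in> {0..vbar}"
    and eps: "\<epsilon> > 0" "\<epsilon> * vbar \<le> 1"
    and rho: "0 < \<rho>" "\<rho> \<le> vbar"
    and mubar: "\<mu>bar \<ge> vbar / \<rho>" and mu1: "0 \<le> \<mu>1" "\<mu>1 \<le> \<mu>bar"
begin

lemma vbar_pos: "vbar > 0" using rho by linarith

lemma mubar_nn: "\<mu>bar \<ge> 0" using mu1 by linarith

lemma mu_range: "0 \<le> mu t \<and> mu t \<le> \<mu>bar"
  by (cases t) (auto simp: mu0 st_Suc mu1 mubar_nn)

lemma z_bounds: assumes "t < T" shows "0 \<le> zz t" "zz t \<le> vbar" "zz t \<le> v t / (1 + mu t)"
proof -
  have mt: "0 \<le> mu t" using mu_range by blast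
  have vt: "0 \<le> v t" "v t \<le> vbar" "0 \<le> p t" "p t \<le> vbar" using vp assms by auto
  show "0 \<le> zz t" "zz t \<le> vbar" using vt by (auto simp: zz_def)
  show "zz t \<le> v t / (1 + mu t)"
    using vt mt by (auto simp: zz_def bid_def)
qed

lemma no_top: assumes "t < T" shows "mu t - \<epsilon> * (\<rho> - zz t) \<le> \<mu>bar"
proof (cases "mu t \<ge> vbar / \<rho> - 1")
  case True
  have mt: "0 \<le> mu t" using mu_range by blast
  have "v t / (1 + mu t) \<le> vbar / (vbar / \<rho>)"
  proof (rule frac_le)
    show "0 \<le> vbar" using vbar_pos by simp
    show "v t \<le> vbar" using vp assms by auto
    show "0 < vbar / \<rho>" using vbar_pos rho by simp
    show "vbar / \<rho> \<le> 1 + mu t" using True by linarith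
  qed
  also have "\<dots> = \<rho>" using vbar_pos rho by simp
  finally have "zz t \<le> \<rho>" using z_bounds[OF assms] by linarith
  then have "\<epsilon> * (\<rho> - zz t) \<ge> 0" using eps by simp
  then show ?thesis using mu_range[of t] by linarith
next
  case False
  have "\<epsilon> * (zz t - \<rho>) \<le> \<epsilon> * vbar"
    using z_bounds[OF assms] rho eps by (intro mult_left_mono) auto
  then show ?thesis using False eps mubar by (simp add: algebra_simps)
qed

lemma mu_step: assumes "t < T" shows "mu (Suc t) = max 0 (mu t + \<epsilon> * (zz t - \<rho>))"
  using no_top[OF assms] by (simp add: st_Suc algebra_simps)

lemma spend_bound: "n \<le> T \<Longrightarrow> \<epsilon> * (\<Sum>t<n. (zz t - \<rho>)) \<le> mu n - \<mu>1"
proof (induction n)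
  case 0 then show ?case by (simp add: mu0)
next
  case (Suc n)
  then have "\<epsilon> * (\<Sum>t<n. (zz t - \<rho>)) \<le> mu n - \<mu>1" by simp
  moreover have "mu (Suc n) \<ge> mu n + \<epsilon> * (zz n - \<rho>)"
    using mu_step[of n] Suc.prems by simp
  ultimately show ?case by (simp add: algebra_simps)
qed

lemma ogd: "n \<le> T \<Longrightarrow> (\<Sum>t<n. mu t * (zz t - \<rho>)) \<ge> ((mu n)\<^sup>2 - \<mu>1\<^sup>2) / (2 * \<epsilon>) - real n * \<epsilon> * vbar\<^sup>2 / 2"
proof (induction n)
  case 0 then show ?case by (simp add: mu0)
next
  case (Suc n)
  have n: "n < T" using Suc.prems by simp
  define d where "d = zz n - \<rho>"
  have d1: "\<bar>d\<bar> \<le> vbar" using z_bounds[OF n] rho unfolding d_def by auto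
  have d2: "d\<^sup>2 \<le> vbar\<^sup>2" using d1 by (metis abs_le_square_iff abs_of_pos vbar_pos)
  have "(mu (Suc n))\<^sup>2 \<le> (mu n + \<epsilon> * d)\<^sup>2"
    unfolding mu_step[OF n] d_def[symmetric]
    by (cases "mu n + \<epsilon> * d \<ge> 0") (auto simp: max_def)
  also have "\<dots> = (mu n)\<^sup>2 + 2 * \<epsilon> * (mu n * d) + \<epsilon>\<^sup>2 * d\<^sup>2"
    by (simp add: power2_eq_square algebra_simps)
  also have "\<epsilon>\<^sup>2 * d\<^sup>2 \<le> \<epsilon>\<^sup>2 * vbar\<^sup>2" using d2 by (intro mult_left_mono) auto
  finally have "(mu (Suc n))\<^sup>2 \<le> (mu n)\<^sup>2 + 2 * \<epsilon> * (mu n * d) + \<epsilon>\<^sup>2 * vbar\<^sup>2" by simp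
  then have key: "mu n * d \<ge> ((mu (Suc n))\<^sup>2 - (mu n)\<^sup>2) / (2 * \<epsilon>) - \<epsilon> * vbar\<^sup>2 / 2"
    using eps by (simp add: field_simps power2_eq_square)
  have IH: "(\<Sum>t<n. mu t * (zz t - \<rho>)) \<ge> ((mu n)\<^sup>2 - \<mu>1\<^sup>2) / (2 * \<epsilon>) - real n * \<epsilon> * vbar\<^sup>2 / 2"
    using Suc by simp
  have "((mu (Suc n))\<^sup>2 - \<mu>1\<^sup>2) / (2 * \<epsilon>) - real (Suc n) * \<epsilon> * vbar\<^sup>2 / 2
     = (((mu n)\<^sup>2 - \<mu>1\<^sup>2) / (2 * \<epsilon>) - real n * \<epsilon> * vbar\<^sup>2 / 2)
       + (((mu (Suc n))\<^sup>2 - (mu n)\<^sup>2) / (2 * \<epsilon>) - \<epsilon> * vbar\<^sup>2 / 2)"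
    using eps by (simp add: field_simps)
  also have "\<dots> \<le> (\<Sum>t<n. mu t * (zz t - \<rho>)) + mu n * d" using IH key by linarith
  finally show ?case by (simp add: d_def)
qed

lemma rev_nonneg: "t < T \<Longrightarrow> (if bid t \<ge> p t then v t - p t else 0) \<ge> 0"
proof -
  assume t: "t < T"
  have mt: "0 \<le> mu t" using mu_range by blast
  have vt: "0 \<le> v t" using vp t by auto
  have "v t / (1 + mu t) \<le> v t" using mt vt by (simp add: divide_le_eq algebra_simps mult_nonneg_nonneg)
  then show ?thesis by (auto simp: bid_def)
qed

lemma pac_pathwise:
  assumes N: "N \<le> T" "\<rho> * real N + \<mu>bar / \<epsilon> + vbar \<le> B"
  shows "pac_revenue \<epsilon> \<rho> \<mu>bar \<mu>1 B v p T \<ge>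
    (\<Sum>t<N. hp (mu t) (v t) (p t) + mu t * \<rho>) - \<mu>bar\<^sup>2 / (2 * \<epsilon>) - real N * \<epsilon> * vbar\<^sup>2 / 2"
proof -
  have clip: "(if bid t \<ge> p t then v t - p t else 0) = hp (mu t) (v t) (p t) + mu t * zz t" if t: "t < N" for t
  proof -
    have tT: "t < T" using t N by simp
    have mt: "0 \<le> mu t" using mu_range by blast
    have vt: "0 \<le> v t" "v t \<le> vbar" "0 \<le> p t" using vp tT by auto
    have "\<epsilon> * (\<Sum>s<t. (zz s - \<rho>)) \<le> mu t - \<mu>1" using spend_bound[of t] tT by simp
    also have "\<dots> \<le> \<mu>bar" using mu_range[of t] mu1 by linarith
    finally have "(\<Sum>s<t. (zz s - \<rho>)) \<le> \<mu>bar / \<epsilon>" using eps by (simp add: field_simps)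
    then have "(\<Sum>s<t. zz s) \<le> \<rho> * t + \<mu>bar / \<epsilon>" by (simp add: sum_subtractf algebra_simps)
    moreover have "\<rho> * t \<le> \<rho> * N" using t rho by simp
    ultimately have "bb t \<ge> vbar" using N bb_eq[of t] by linarith
    moreover have "v t / (1 + mu t) \<le> v t" using mt vt by (simp add: divide_le_eq algebra_simps mult_nonneg_nonneg)
    ultimately have b: "bid t = v t / (1 + mu t)" using vt by (simp add: bid_def)
    have iff: "(p t \<le> v t / (1 + mu t)) = ((1 + mu t) * p t \<le> v t)"
      using mt by (simp add: le_divide_eq algebra_simps)
    show ?thesis
      using iff by (auto simp: b zz_def hp_def algebra_simps)
  qed
  have "(\<Sum>t<T. if bid t \<ge> p t then v t - p t else 0) \<ge> (\<Sum>t<N. if bid t \<ge> p t then v t - p t else 0)"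
    using N rev_nonneg by (intro sum_mono2) auto
  also have "(\<Sum>t<N. if bid t \<ge> p t then v t - p t else 0) = (\<Sum>t<N. hp (mu t) (v t) (p t) + mu t * \<rho>) + (\<Sum>t<N. mu t * (zz t - \<rho>))"
    by (simp add: clip sum.distrib[symmetric] algebra_simps)
  finally have A: "pac_revenue \<epsilon> \<rho> \<mu>bar \<mu>1 B v p T \<ge> (\<Sum>t<N. hp (mu t) (v t) (p t) + mu t * \<rho>) + (\<Sum>t<N. mu t * (zz t - \<rho>))"
    by (simp add: rev_eq)
  have "(\<Sum>t<N. mu t * (zz t - \<rho>)) \<ge> ((mu N)\<^sup>2 - \<mu>1\<^sup>2) / (2 * \<epsilon>) - real N * \<epsilon> * vbar\<^sup>2 / 2"
    using ogd N by simp
  moreover have "((mu N)\<^sup>2 - \<mu>1\<^sup>2) / (2 * \<epsilon>) \<ge> - \<mu>bar\<^sup>2 / (2 * \<epsilon>)"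
  proof -
    have "\<mu>1\<^sup>2 \<le> \<mu>bar\<^sup>2" using mu1 by (simp add: power_mono)
    then have "(mu N)\<^sup>2 - \<mu>1\<^sup>2 \<ge> - \<mu>bar\<^sup>2" by (smt (verit) zero_le_power2)
    then have "- \<mu>bar\<^sup>2 / (2 * \<epsilon>) \<le> ((mu N)\<^sup>2 - \<mu>1\<^sup>2) / (2 * \<epsilon>)"
      using eps by (intro divide_right_mono) auto
    then show ?thesis by simp
  qed
  ultimately show ?thesis using A by linarith
qed

end
end

lemma pac_state_local:
  "(\<And>s. s < t \<Longrightarrow> v s = v' s \<and> p s = p' s) \<Longrightarrow>
   pac_state \<epsilon> \<rho> \<mu>bar \<mu>1 B v p t = pac_state \<epsilon> \<rho> \<mu>bar \<mu>1 B v' p' t"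
proof (induction t)
  case 0 then show ?case by simp
next
  case (Suc t)
  then have "pac_state \<epsilon> \<rho> \<mu>bar \<mu>1 B v p t = pac_state \<epsilon> \<rho> \<mu>bar \<mu>1 B v' p' t" by simp
  moreover have "v t = v' t" "p t = p' t" using Suc.prems by auto
  ultimately show ?case by (simp add: Let_def split_beta)
qed

lemma thr_hist_local:
  "(\<And>s. s < t \<Longrightarrow> v s = v' s \<and> p s = p' s \<and> \<gamma> s = \<gamma>' s) \<Longrightarrow>
   thr_hist full \<beta> v p \<gamma> t = thr_hist full \<beta> v' p' \<gamma>' t"
proof (induction t)
  case 0 then show ?case by simp
next
  case (Suc t)
  then have "thr_hist full \<beta> v p \<gamma> t = thr_hist full \<beta> v' p' \<gamma>' t" by simp
  moreover have "v t = v' t" "p t = p' t" "\<gamma> t = \<gamma>' t" using Suc.prems by auto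
  ultimately show ?case by (simp only: thr_hist.simps Let_def)
qed

lemma thr_x_local:
  "(\<And>s. s < t \<Longrightarrow> v s = v' s \<and> p s = p' s \<and> \<gamma> s = \<gamma>' s) \<Longrightarrow> v t = v' t \<Longrightarrow> \<gamma> t = \<gamma>' t \<Longrightarrow>
   thr_x full \<beta> v p \<gamma> t = thr_x full \<beta> v' p' \<gamma>' t"
  unfolding thr_x_def using thr_hist_local[of t v v' p p' \<gamma> \<gamma>' full \<beta>] by simp

lemma thr_revenue_eq:
  "thr_revenue full \<beta> v p \<gamma> T = (\<Sum>t<T. if thr_x full \<beta> v p \<gamma> t \<and> p t < v t then v t - p t else 0)"
  unfolding thr_revenue_def by (intro sum.cong) auto

lemma thr_lagrange:
  assumes feas: "thr_payment full \<beta> v p \<gamma> T \<le> B" and p: "\<And>t. t < T \<Longrightarrow> p t \<ge> 0" and mu: "\<mu> \<ge> 0"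
  shows "thr_revenue full \<beta> v p \<gamma> T \<le> \<mu> * B +
     (\<Sum>t<T. if thr_x full \<beta> v p \<gamma> t \<and> p t < v t then v t - (1 + \<mu>) * p t else 0)"
proof -
  let ?e = "\<lambda>t. thr_x full \<beta> v p \<gamma> t \<and> p t < v t"
  have pay: "(\<Sum>t<T. if ?e t then p t else 0) \<le> thr_payment full \<beta> v p \<gamma> T"
    unfolding thr_payment_def using p by (intro sum_mono) auto
  have "thr_revenue full \<beta> v p \<gamma> T = (\<Sum>t<T. if ?e t then v t - (1 + \<mu>) * p t else 0) + \<mu> * (\<Sum>t<T. if ?e t then p t else 0)"
    unfolding thr_revenue_eq sum_distrib_left sum.distrib[symmetric]
    by (intro sum.cong) (auto simp: algebra_simps)
  also have "\<mu> * (\<Sum>t<T. if ?e t then p t else 0) \<le> \<mu> * B"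
    using pay feas mu by (intro mult_left_mono) auto
  finally show ?thesis by simp
qed

lemma integral_le_const_prob:
  fixes f :: "'a \<Rightarrow> real"
  assumes "prob_space M" "AE x in M. f x \<le> c" "c \<ge> 0"
  shows "integral\<^sup>L M f \<le> c"
proof (cases "integrable M f")
  case True
  interpret prob_space M by fact
  have "integral\<^sup>L M f \<le> integral\<^sup>L M (\<lambda>_. c)"
    using True assms by (intro integral_mono_AE) auto
  then show ?thesis by (simp add: prob_space)
next
  case False then show ?thesis using assms by (simp add: not_integrable_integral_eq)
qed

context setting begin

abbreviation "K \<equiv> F \<Otimes>\<^sub>M G"

lemma sets_K[measurable_cong]: "sets K = sets (borel \<Otimes>\<^sub>M borel)"
  by (intro sets_pair_measure_cong F_sets G_sets)

lemma K_prob: "prob_space K"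
  using F_prob G_prob by (intro prob_space_pair) auto

lemma space_K: "space K = UNIV"
  using sets_K[THEN sets_eq_imp_space_eq] by (simp add: space_pair_measure)

lemma space_F: "space F = UNIV"
  using F_sets[THEN sets_eq_imp_space_eq] by simp
lemma space_G: "space G = UNIV"
  using G_sets[THEN sets_eq_imp_space_eq] by simp

lemma K_AE: "AE x in K. fst x \<in> {0..vbar} \<and> snd x \<in> {0..vbar}"
proof -
  interpret F: prob_space F by (rule F_prob)
  interpret G: prob_space G by (rule G_prob)
  interpret pair_sigma_finite F G ..
  show ?thesis
  proof (rule AE_pair_measure)
    show "{x \<in> space K. fst x \<in> {0..vbar} \<and> snd x \<in> {0..vbar}} \<in> sets K" by measurable
    show "AE x in F. AE y in G. fst (x, y) \<in> {0..vbar} \<and> snd (x, y) \<in> {0..vbar}"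
      by (rule AE_mp[OF F_AE], rule AE_I2) (auto intro: AE_mp[OF G_AE] AE_I2)
  qed
qed

lemma GU_AE: "AE z in G \<Otimes>\<^sub>M U. fst z \<in> {0..vbar}"
proof -
  interpret G: prob_space G by (rule G_prob)
  interpret U: prob_space U by (rule U_prob)
  interpret pair_sigma_finite G U ..
  show ?thesis
  proof (rule AE_pair_measure)
    have "sets (G \<Otimes>\<^sub>M U) = sets (borel \<Otimes>\<^sub>M borel)" by (intro sets_pair_measure_cong G_sets) auto
    then show "{x \<in> space (G \<Otimes>\<^sub>M U). fst x \<in> {0..vbar}} \<in> sets (G \<Otimes>\<^sub>M U)" by measurable
    show "AE x in G. AE y in U. fst (x, y) \<in> {0..vbar}"
      by (rule AE_mp[OF G_AE], rule AE_I2) auto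
  qed
qed

lemma R_AE: "AE y in R. fst y \<in> {0..vbar} \<and> fst (snd y) \<in> {0..vbar}"
proof -
  interpret F: prob_space F by (rule F_prob)
  interpret G: prob_space G by (rule G_prob)
  interpret U: prob_space U by (rule U_prob)
  interpret GU: prob_space "G \<Otimes>\<^sub>M U" by (intro prob_space_pair G_prob U_prob)
  interpret pair_sigma_finite F "G \<Otimes>\<^sub>M U" ..
  show ?thesis unfolding round_measure_def
  proof (rule AE_pair_measure)
    show "{x \<in> space (F \<Otimes>\<^sub>M (G \<Otimes>\<^sub>M U)). fst x \<in> {0..vbar} \<and> fst (snd x) \<in> {0..vbar}} \<in> sets (F \<Otimes>\<^sub>M (G \<Otimes>\<^sub>M U))"
      using sets_R unfolding round_measure_def by measurable
    show "AE x in F. AE y in G \<Otimes>\<^sub>M U. fst (x, y) \<in> {0..vbar} \<and> fst (snd (x, y)) \<in> {0..vbar}"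
      by (rule AE_mp[OF F_AE], rule AE_I2) (auto intro: AE_mp[OF GU_AE] AE_I2)
  qed
qed

lemma distr_R_K: "distr R K (\<lambda>y. (fst y, fst (snd y))) = K"
proof -
  interpret U: prob_space U by (rule U_prob)
  interpret G: prob_space G by (rule G_prob)
  have "distr F F (\<lambda>x. x) \<Otimes>\<^sub>M distr (G \<Otimes>\<^sub>M U) G fst = distr (F \<Otimes>\<^sub>M (G \<Otimes>\<^sub>M U)) (F \<Otimes>\<^sub>M G) (\<lambda>(x, y). (x, fst y))"
    by (intro pair_measure_distr) (auto simp: U.distr_pair_fst G.sigma_finite_measure_axioms)
  then show ?thesis
    by (simp add: U.distr_pair_fst round_measure_def split_beta')
qed

lemma meas_RK: "(\<lambda>y. (fst y, fst (snd y))) \<in> measurable R K"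
  by measurable

lemma integral_R_K:
  fixes k :: "real \<times> real \<Rightarrow> real"
  assumes "k \<in> borel_measurable (borel \<Otimes>\<^sub>M borel)"
  shows "(\<integral>y. k (fst y, fst (snd y)) \<partial>R) = integral\<^sup>L K k"
proof -
  have k: "k \<in> borel_measurable K" using assms by (simp add: measurable_cong_sets[OF sets_K refl])
  have "integral\<^sup>L K k = integral\<^sup>L (distr R K (\<lambda>y. (fst y, fst (snd y)))) k" by (simp add: distr_R_K)
  also have "\<dots> = (\<integral>y. k (fst y, fst (snd y)) \<partial>R)" by (rule integral_distr[OF meas_RK k])
  finally show ?thesis ..
qed

lemma nn_integral_R_K:
  fixes k :: "real \<times> real \<Rightarrow> ennreal"
  assumes "k \<in> borel_measurable (borel \<Otimes>\<^sub>M borel)"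
  shows "(\<integral>\<^sup>+y. k (fst y, fst (snd y)) \<partial>R) = integral\<^sup>N K k"
proof -
  have k: "k \<in> borel_measurable K" using assms by (simp add: measurable_cong_sets[OF sets_K refl])
  have "integral\<^sup>N K k = integral\<^sup>N (distr R K (\<lambda>y. (fst y, fst (snd y)))) k" by (simp add: distr_R_K)
  also have "\<dots> = (\<integral>\<^sup>+y. k (fst y, fst (snd y)) \<partial>R)" by (rule nn_integral_distr[OF meas_RK]) (simp add: distr_R_K k)
  finally show ?thesis ..
qed

abbreviation "\<Omega> T \<equiv> rounds F G T"

lemma Omega_prob: "prob_space (\<Omega> T)"
  unfolding rounds_def using R_prob by (intro prob_space_PiM) auto

lemma Omega_AE: "AE \<omega> in \<Omega> T. \<forall>t<T. vals \<omega> t \<in> {0..vbar} \<and> bids \<omega> t \<in> {0..vbar}"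
proof -
  have "AE \<omega> in \<Omega> T. \<forall>t\<in>{..<T}. vals \<omega> t \<in> {0..vbar} \<and> bids \<omega> t \<in> {0..vbar}"
  proof (rule eventually_ball_finite)
    show "finite {..<T}" by simp
    show "\<forall>t\<in>{..<T}. AE \<omega> in \<Omega> T. vals \<omega> t \<in> {0..vbar} \<and> bids \<omega> t \<in> {0..vbar}"
    proof
      fix t assume t: "t \<in> {..<T}"
      show "AE \<omega> in \<Omega> T. vals \<omega> t \<in> {0..vbar} \<and> bids \<omega> t \<in> {0..vbar}"
        unfolding rounds_def vals_def bids_def
        using AE_PiM_component[of "{..<T}" "\<lambda>_. R" t "\<lambda>y. fst y \<in> {0..vbar} \<and> fst (snd y) \<in> {0..vbar}"] R_prob t R_AE
        by auto
    qed
  qed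
  then show ?thesis by auto
qed

lemma meas_vals[measurable]: "t < T \<Longrightarrow> (\<lambda>\<omega>. vals \<omega> t) \<in> borel_measurable (\<Omega> T)"
  unfolding rounds_def vals_def by measurable
lemma meas_bids[measurable]: "t < T \<Longrightarrow> (\<lambda>\<omega>. bids \<omega> t) \<in> borel_measurable (\<Omega> T)"
  unfolding rounds_def bids_def by measurable
lemma meas_gams[measurable]: "t < T \<Longrightarrow> (\<lambda>\<omega>. gams \<omega> t) \<in> borel_measurable (\<Omega> T)"
  unfolding rounds_def gams_def by measurable

end

context setting begin

definition psi :: "real \<Rightarrow> real \<Rightarrow> real" where
  "psi \<mu> v = (\<integral>p. (if p < v then v - (1 + \<mu>) * p else 0) \<partial>G)"

definition Dt :: "real \<Rightarrow> real" where
  "Dt \<mu> = (\<integral>v. max (psi \<mu> v) 0 \<partial>F) + \<mu> * \<rho>"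

lemma kpsi_int:
  assumes mu: "\<mu> \<ge> 0"
  shows "integrable K (\<lambda>x. if snd x < fst x then fst x - (1 + \<mu>) * snd x else 0)"
proof -
  interpret prob_space K by (rule K_prob)
  show ?thesis
  proof (rule integrable_const_bound[where B="(2 + \<mu>) * vbar"])
    show "AE x in K. norm (if snd x < fst x then fst x - (1 + \<mu>) * snd x else 0) \<le> (2 + \<mu>) * vbar"
      using K_AE
    proof eventually_elim
      case (elim x)
      then have "\<bar>fst x - (1 + \<mu>) * snd x\<bar> \<le> vbar + (1 + \<mu>) * vbar"
        using mu by (intro abs_triangle_ineq4[THEN order_trans] add_mono) (auto simp: abs_mult intro!: mult_left_mono)
      then show ?case using vbar_pos by (auto simp: algebra_simps)
    qed
  qed measurable
qed

lemma psi_int: "\<mu> \<ge> 0 \<Longrightarrow> integrable F (psi \<mu>)"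
proof -
  assume mu: "\<mu> \<ge> 0"
  interpret F: prob_space F by (rule F_prob)
  interpret G: prob_space G by (rule G_prob)
  interpret pair_sigma_finite F G ..
  show ?thesis
    using integrable_fst'[OF kpsi_int[OF mu]] unfolding psi_def by (simp cong: if_cong)
qed

lemma psi_plus_int: "\<mu> \<ge> 0 \<Longrightarrow> integrable F (\<lambda>v. max (psi \<mu> v) 0)"
  using psi_int by (intro integrable_max) auto

lemma round_bound:
  fixes X :: "real \<Rightarrow> real \<Rightarrow> bool"
  assumes mu: "\<mu> \<ge> 0"
    and gm: "(\<lambda>y. if X (fst y) (snd (snd y)) \<and> fst (snd y) < fst y then fst y - (1 + \<mu>) * fst (snd y) else 0) \<in> borel_measurable R"
  shows "(\<integral>y. (if X (fst y) (snd (snd y)) \<and> fst (snd y) < fst y then fst y - (1 + \<mu>) * fst (snd y) else 0) \<partial>R)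
          \<le> (\<integral>v. max (psi \<mu> v) 0 \<partial>F)"
proof -
  define g where "g = (\<lambda>y. if X (fst y) (snd (snd y)) \<and> fst (snd y) < fst y then fst y - (1 + \<mu>) * fst (snd y) else 0)"
  interpret F: prob_space F by (rule F_prob)
  interpret G: prob_space G by (rule G_prob)
  interpret U: prob_space U by (rule U_prob)
  interpret GU: prob_space "G \<Otimes>\<^sub>M U" by (intro prob_space_pair G_prob U_prob)
  interpret R: prob_space R by (rule R_prob)
  interpret FGU: pair_sigma_finite F "G \<Otimes>\<^sub>M U" ..
  interpret GU2: pair_sigma_finite G U ..
  have gm': "g \<in> borel_measurable (F \<Otimes>\<^sub>M (G \<Otimes>\<^sub>M U))" using gm unfolding g_def round_measure_def .
  have gint: "integrable R g"
  proof (rule R.integrable_const_bound[where B="(2 + \<mu>) * vbar"])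
    show "AE x in R. norm (g x) \<le> (2 + \<mu>) * vbar"
      using R_AE
    proof eventually_elim
      case (elim x)
      then have "\<bar>fst x - (1 + \<mu>) * fst (snd x)\<bar> \<le> vbar + (1 + \<mu>) * vbar"
        using mu by (intro abs_triangle_ineq4[THEN order_trans] add_mono) (auto simp: abs_mult intro!: mult_left_mono)
      then show ?case using vbar_pos by (auto simp: algebra_simps g_def)
    qed
  qed (use gm g_def in simp)
  have gint': "integrable (F \<Otimes>\<^sub>M (G \<Otimes>\<^sub>M U)) g" using gint unfolding round_measure_def .
  have "integral\<^sup>L R g = (\<integral>v. (\<integral>z. g (v, z) \<partial>(G \<Otimes>\<^sub>M U)) \<partial>F)"
    unfolding round_measure_def using FGU.integral_fst'[OF gint'] by simp
  also have "\<dots> \<le> (\<integral>v. max (psi \<mu> v) 0 \<partial>F)"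
  proof (rule integral_mono)
    show "integrable F (\<lambda>v. \<integral>z. g (v, z) \<partial>(G \<Otimes>\<^sub>M U))" by (rule FGU.integrable_fst'[OF gint'])
    show "integrable F (\<lambda>v. max (psi \<mu> v) 0)" by (rule psi_plus_int[OF mu])
  next
    fix v assume "v \<in> space F"
    define f where "f = (\<lambda>p \<gamma>. if X v \<gamma> \<and> p < v then v - (1 + \<mu>) * p else 0)"
    have hm: "(\<lambda>z. g (v, z)) \<in> borel_measurable (G \<Otimes>\<^sub>M U)"
      using measurable_Pair2[OF gm'] space_F by simp
    have hint: "integrable (G \<Otimes>\<^sub>M U) (\<lambda>z. g (v, z))"
    proof (rule GU.integrable_const_bound[where B="\<bar>v\<bar> + (1 + \<mu>) * vbar"])
      show "AE z in G \<Otimes>\<^sub>M U. norm (g (v, z)) \<le> \<bar>v\<bar> + (1 + \<mu>) * vbar"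
        using GU_AE
      proof eventually_elim
        case (elim z)
        then have "\<bar>v - (1 + \<mu>) * fst z\<bar> \<le> \<bar>v\<bar> + (1 + \<mu>) * vbar"
          using mu by (intro abs_triangle_ineq4[THEN order_trans] add_mono) (auto simp: abs_mult intro!: mult_left_mono)
        then show ?case using vbar_pos mu by (auto simp: g_def intro: add_nonneg_nonneg)
      qed
    qed (rule hm)
    have hint2: "integrable (G \<Otimes>\<^sub>M U) (case_prod f)"
      using hint by (simp add: g_def f_def split_beta' cong: if_cong)
    have inner: "(\<integral>p. f p \<gamma> \<partial>G) = (if X v \<gamma> then psi \<mu> v else 0)" for \<gamma>
      by (simp add: f_def psi_def)
    have "(\<integral>z. g (v, z) \<partial>(G \<Otimes>\<^sub>M U)) = integral\<^sup>L (G \<Otimes>\<^sub>M U) (case_prod f)"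
      by (simp add: g_def f_def split_beta' cong: if_cong)
    also have "\<dots> = (\<integral>\<gamma>. (\<integral>p. f p \<gamma> \<partial>G) \<partial>U)"
      using GU2.integral_snd[OF hint2] by simp
    also have "\<dots> = (\<integral>\<gamma>. (if X v \<gamma> then psi \<mu> v else 0) \<partial>U)"
      by (simp add: inner)
    also have "\<dots> \<le> (\<integral>\<gamma>. max (psi \<mu> v) 0 \<partial>U)"
    proof (rule integral_mono)
      show "integrable U (\<lambda>\<gamma>. if X v \<gamma> then psi \<mu> v else 0)"
        using GU2.integrable_snd[OF hint2] by (simp add: inner)
    qed auto
    also have "\<dots> = max (psi \<mu> v) 0" by (simp add: U.prob_space)
    finally show "(\<integral>z. g (v, z) \<partial>(G \<Otimes>\<^sub>M U)) \<le> max (psi \<mu> v) 0" .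
  qed
  finally show ?thesis unfolding g_def .
qed

end

context setting begin

lemma Dt_nonneg: "\<mu> \<ge> 0 \<Longrightarrow> Dt \<mu> \<ge> 0"
  unfolding Dt_def using rho_pos by (intro add_nonneg_nonneg integral_nonneg) auto

lemma f_int_Omega:
  assumes mu: "\<mu> \<ge> 0" and t: "t < T"
    and fm: "(\<lambda>\<omega>. if P \<omega> \<and> bids \<omega> t < vals \<omega> t then vals \<omega> t - (1 + \<mu>) * bids \<omega> t else 0) \<in> borel_measurable (\<Omega> T)"
  shows "integrable (\<Omega> T) (\<lambda>\<omega>. if P \<omega> \<and> bids \<omega> t < vals \<omega> t then vals \<omega> t - (1 + \<mu>) * bids \<omega> t else 0)"
proof -
  interpret O: prob_space "\<Omega> T" by (rule Omega_prob)
  show ?thesis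
  proof (rule O.integrable_const_bound[where B="(2 + \<mu>) * vbar"])
    show "AE x in \<Omega> T. norm (if P x \<and> bids x t < vals x t then vals x t - (1 + \<mu>) * bids x t else 0) \<le> (2 + \<mu>) * vbar"
      using Omega_AE[of T]
    proof eventually_elim
      case (elim x)
      then have "\<bar>vals x t - (1 + \<mu>) * bids x t\<bar> \<le> vbar + (1 + \<mu>) * vbar"
        using mu t by (intro abs_triangle_ineq4[THEN order_trans] add_mono) (auto simp: abs_mult intro!: mult_left_mono)
      then show ?case using vbar_pos by (auto simp: algebra_simps)
    qed
  qed (rule fm)
qed

lemma Omega_round_bound:
  assumes mu: "\<mu> \<ge> 0" and t: "t < T"
    and fm: "(\<lambda>\<omega>. if thr_x full \<beta> (vals \<omega>) (bids \<omega>) (gams \<omega>) t \<and> bids \<omega> t < vals \<omega> t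
                 then vals \<omega> t - (1 + \<mu>) * bids \<omega> t else 0) \<in> borel_measurable (\<Omega> T)"
  shows "(\<integral>\<omega>. (if thr_x full \<beta> (vals \<omega>) (bids \<omega>) (gams \<omega>) t \<and> bids \<omega> t < vals \<omega> t
                 then vals \<omega> t - (1 + \<mu>) * bids \<omega> t else 0) \<partial>\<Omega> T) \<le> (\<integral>v. max (psi \<mu> v) 0 \<partial>F)"
proof -
  define f where "f = (\<lambda>\<omega>. if thr_x full \<beta> (vals \<omega>) (bids \<omega>) (gams \<omega>) t \<and> bids \<omega> t < vals \<omega> t
                 then vals \<omega> t - (1 + \<mu>) * bids \<omega> t else 0)"
  interpret P: product_prob_space "\<lambda>_::nat. R" using R_prob by (simp add: product_prob_space_def product_prob_space_axioms_def product_sigma_finite_def prob_space_imp_sigma_finite)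
  define I where "I = {..<T} - {t}"
  have ins: "insert t I = {..<T}" using t by (auto simp: I_def)
  have tI: "t \<notin> I" "finite I" by (auto simp: I_def)
  have fint: "integrable (\<Omega> T) f" unfolding f_def by (rule f_int_Omega[OF mu t fm])
  have fint': "integrable (PiM (insert t I) (\<lambda>_. R)) f" using fint by (simp add: ins rounds_def)
  have fm': "f \<in> borel_measurable (PiM (insert t I) (\<lambda>_. R))" using fm by (simp add: ins rounds_def f_def)
  have "integral\<^sup>L (\<Omega> T) f = (\<integral>x. (\<integral>y. f (x(t:=y)) \<partial>R) \<partial>PiM I (\<lambda>_. R))"
    using P.product_integral_insert[OF tI(2) tI(1) fint'] by (simp add: ins rounds_def)
  also have "\<dots> \<le> (\<integral>v. max (psi \<mu> v) 0 \<partial>F)"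
  proof (rule integral_le_const_prob)
    show "prob_space (PiM I (\<lambda>_. R))" using R_prob by (intro prob_space_PiM) auto
    show "0 \<le> (\<integral>v. max (psi \<mu> v) 0 \<partial>F)" by (rule Bochner_Integration.integral_nonneg) auto
    show "AE x in PiM I (\<lambda>_. R). (\<integral>y. f (x(t:=y)) \<partial>R) \<le> (\<integral>v. max (psi \<mu> v) 0 \<partial>F)"
    proof (rule AE_I2)
      fix x assume x: "x \<in> space (PiM I (\<lambda>_. R))"
      define X where "X = \<beta> t (thr_hist full \<beta> (vals x) (bids x) (gams x) t)"
      have eq: "f (x(t:=y)) = (if X (fst y) (snd (snd y)) \<and> fst (snd y) < fst y then fst y - (1 + \<mu>) * fst (snd y) else 0)" for y
      proof -
        have "thr_hist full \<beta> (vals (x(t:=y))) (bids (x(t:=y))) (gams (x(t:=y))) t = thr_hist full \<beta> (vals x) (bids x) (gams x) t"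
          by (rule thr_hist_local) (auto simp: vals_def bids_def gams_def)
        then show ?thesis
          by (simp add: f_def thr_x_def X_def vals_def bids_def gams_def)
      qed
      have gm: "(\<lambda>y. f (x(t:=y))) \<in> borel_measurable R"
        using measurable_comp[OF measurable_component_update[OF x tI(1)] fm'] by (simp add: comp_def)
      have "(\<integral>y. f (x(t:=y)) \<partial>R) = (\<integral>y. (if X (fst y) (snd (snd y)) \<and> fst (snd y) < fst y then fst y - (1 + \<mu>) * fst (snd y) else 0) \<partial>R)"
        by (simp add: eq)
      also have "\<dots> \<le> (\<integral>v. max (psi \<mu> v) 0 \<partial>F)"
        by (rule round_bound[OF mu]) (use gm eq in simp)
      finally show "(\<integral>y. f (x(t:=y)) \<partial>R) \<le> (\<integral>v. max (psi \<mu> v) 0 \<partial>F)" .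
    qed
  qed
  finally show ?thesis unfolding f_def .
qed

end

context setting begin

definition Phi :: "nat \<Rightarrow> nat \<Rightarrow> (nat \<Rightarrow> real \<times> real \<times> real) \<Rightarrow> (nat \<Rightarrow> real \<times> real \<times> real)" where
  "Phi T n \<omega> = (\<lambda>s. if s < T then (if s < n then \<omega> s else (fst (\<omega> s), fst (\<omega> s) + 1, snd (snd (\<omega> s)))) else undefined)"

lemma tup_meas: "(\<lambda>y. (fst y, fst y + 1, snd (snd y))) \<in> measurable R R"
  by measurable

lemma Phi_meas: "Phi T n \<in> measurable (\<Omega> T) (\<Omega> T)"
  unfolding rounds_def Phi_def
proof (rule measurable_PiM_single')
  fix i assume i: "i \<in> {..<T}"
  have c: "(\<lambda>\<omega>. \<omega> i) \<in> measurable (PiM {..<T} (\<lambda>_. R)) R"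
    by (rule measurable_component_singleton) (use i in simp)
  show "(\<lambda>\<omega>. if i < T then if i < n then \<omega> i else (fst (\<omega> i), fst (\<omega> i) + 1, snd (snd (\<omega> i))) else undefined)
        \<in> PiM {..<T} (\<lambda>_. R) \<rightarrow>\<^sub>M R"
  proof (cases "i < n")
    case True then show ?thesis using i c by simp
  next
    case False
    have "(\<lambda>\<omega>. (fst (\<omega> i), fst (\<omega> i) + 1, snd (snd (\<omega> i)))) \<in> PiM {..<T} (\<lambda>_. R) \<rightarrow>\<^sub>M R"
      using measurable_comp[OF c tup_meas] by (simp add: comp_def)
    then show ?thesis using i False by simp
  qed
next
  show "(\<lambda>\<omega> i. if i < T then if i < n then \<omega> i else (fst (\<omega> i), fst (\<omega> i) + 1, snd (snd (\<omega> i))) else undefined)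
    \<in> space (PiM {..<T} (\<lambda>_. R)) \<rightarrow> (\<Pi>\<^sub>E i\<in>{..<T}. space R)"
    by (simp add: Pi_iff PiE_iff space_R extensional_def)
qed

definition Sx :: "bool \<Rightarrow> strategy \<Rightarrow> nat \<Rightarrow> (nat \<Rightarrow> real \<times> real \<times> real) \<Rightarrow> real" where
  "Sx full \<beta> n \<omega> = (\<Sum>t<n. if thr_x full \<beta> (vals \<omega>) (bids \<omega>) (gams \<omega>) t then max (vals \<omega> t - bids \<omega> t) 0 else 0)"

lemma Rev_Phi:
  assumes n: "n \<le> T"
  shows "thr_revenue full \<beta> (vals (Phi T n \<omega>)) (bids (Phi T n \<omega>)) (gams (Phi T n \<omega>)) T = Sx full \<beta> n \<omega>"
proof -
  let ?w = "Phi T n \<omega>"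
  let ?h = "\<lambda>t. if thr_x full \<beta> (vals \<omega>) (bids \<omega>) (gams \<omega>) t then max (vals \<omega> t - bids \<omega> t) 0 else 0"
  have trm: "(if thr_x full \<beta> (vals ?w) (bids ?w) (gams ?w) t then max (vals ?w t - bids ?w t) 0 else 0)
      = (if t < n then ?h t else 0)" if t: "t < T" for t
  proof (cases "t < n")
    case True
    have "thr_x full \<beta> (vals ?w) (bids ?w) (gams ?w) t = thr_x full \<beta> (vals \<omega>) (bids \<omega>) (gams \<omega>) t"
      by (rule thr_x_local) (use True t n in \<open>auto simp: Phi_def vals_def bids_def gams_def\<close>)
    then show ?thesis using True t by (simp add: Phi_def vals_def bids_def gams_def)
  next
    case False then show ?thesis using t by (simp add: Phi_def vals_def bids_def gams_def)
  qed
  have "thr_revenue full \<beta> (vals ?w) (bids ?w) (gams ?w) T = (\<Sum>t<T. if t < n then ?h t else 0)"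
    unfolding thr_revenue_def by (intro sum.cong) (auto simp: trm)
  also have "\<dots> = (\<Sum>t<n. if t < n then ?h t else 0)"
    using n by (intro sum.mono_neutral_right) auto
  also have "\<dots> = Sx full \<beta> n \<omega>" unfolding Sx_def by (intro sum.cong) auto
  finally show ?thesis .
qed

lemma Sx_meas:
  assumes rm: "(\<lambda>\<omega>. thr_revenue full \<beta> (vals \<omega>) (bids \<omega>) (gams \<omega>) T) \<in> borel_measurable (\<Omega> T)"
    and n: "n \<le> T"
  shows "Sx full \<beta> n \<in> borel_measurable (\<Omega> T)"
proof -
  have "(\<lambda>\<omega>. thr_revenue full \<beta> (vals (Phi T n \<omega>)) (bids (Phi T n \<omega>)) (gams (Phi T n \<omega>)) T) \<in> borel_measurable (\<Omega> T)"
    using measurable_comp[OF Phi_meas rm] by (simp add: comp_def)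
  then show ?thesis using Rev_Phi[OF n] by simp
qed

lemma thr_bound:
  assumes mu: "\<mu> \<ge> 0" and feas: "thr_feasible full \<beta> (\<rho> * real T) T"
  shows "(\<integral>\<omega>. thr_revenue full \<beta> (vals \<omega>) (bids \<omega>) (gams \<omega>) T \<partial>\<Omega> T) \<le> real T * Dt \<mu>"
proof (cases "integrable (\<Omega> T) (\<lambda>\<omega>. thr_revenue full \<beta> (vals \<omega>) (bids \<omega>) (gams \<omega>) T)")
  case False
  then show ?thesis using Dt_nonneg[OF mu] by (simp add: not_integrable_integral_eq)
next
  case True
  interpret O: prob_space "\<Omega> T" by (rule Omega_prob)
  have rm: "(\<lambda>\<omega>. thr_revenue full \<beta> (vals \<omega>) (bids \<omega>) (gams \<omega>) T) \<in> borel_measurable (\<Omega> T)"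
    using True by simp
  define f where "f = (\<lambda>t \<omega>. if thr_x full \<beta> (vals \<omega>) (bids \<omega>) (gams \<omega>) t \<and> bids \<omega> t < vals \<omega> t
                 then vals \<omega> t - (1 + \<mu>) * bids \<omega> t else 0)"
  have fm: "f t \<in> borel_measurable (\<Omega> T)" if t: "t < T" for t
  proof -
    have eq: "f t = (\<lambda>\<omega>. if Sx full \<beta> (Suc t) \<omega> - Sx full \<beta> t \<omega> > 0 then vals \<omega> t - (1 + \<mu>) * bids \<omega> t else 0)"
    proof (rule ext)
      fix \<omega>
      show "f t \<omega> = (if Sx full \<beta> (Suc t) \<omega> - Sx full \<beta> t \<omega> > 0 then vals \<omega> t - (1 + \<mu>) * bids \<omega> t else 0)"
        unfolding f_def Sx_def by (simp add: max_def)
    qed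
    have m1[measurable]: "Sx full \<beta> (Suc t) \<in> borel_measurable (\<Omega> T)" using Sx_meas[OF rm, of "Suc t"] t by simp
    have m2[measurable]: "Sx full \<beta> t \<in> borel_measurable (\<Omega> T)" using Sx_meas[OF rm, of t] t by simp
    have m3[measurable]: "(\<lambda>\<omega>. vals \<omega> t) \<in> borel_measurable (\<Omega> T)" "(\<lambda>\<omega>. bids \<omega> t) \<in> borel_measurable (\<Omega> T)"
      using t by simp_all
    show ?thesis unfolding eq by measurable
  qed
  have fi: "integrable (\<Omega> T) (f t)" if t: "t < T" for t
    using f_int_Omega[OF mu t, of "\<lambda>\<omega>. thr_x full \<beta> (vals \<omega>) (bids \<omega>) (gams \<omega>) t"] fm[OF t] unfolding f_def by simp
  have "(\<integral>\<omega>. thr_revenue full \<beta> (vals \<omega>) (bids \<omega>) (gams \<omega>) T \<partial>\<Omega> T) \<le> (\<integral>\<omega>. \<mu> * (\<rho> * real T) + (\<Sum>t<T. f t \<omega>) \<partial>\<Omega> T)"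
  proof (rule integral_mono_AE)
    show "integrable (\<Omega> T) (\<lambda>\<omega>. \<mu> * (\<rho> * real T) + (\<Sum>t<T. f t \<omega>))"
      by (intro Bochner_Integration.integrable_add Bochner_Integration.integrable_sum integrable_const fi) auto
    show "AE \<omega> in \<Omega> T. thr_revenue full \<beta> (vals \<omega>) (bids \<omega>) (gams \<omega>) T \<le> \<mu> * (\<rho> * real T) + (\<Sum>t<T. f t \<omega>)"
      using Omega_AE[of T]
    proof eventually_elim
      case (elim \<omega>)
      show ?case unfolding f_def
        by (rule thr_lagrange) (use feas elim mu in \<open>auto simp: thr_feasible_def\<close>)
    qed
  qed (rule True)
  also have "\<dots> = \<mu> * (\<rho> * real T) + (\<Sum>t<T. (\<integral>\<omega>. f t \<omega> \<partial>\<Omega> T))"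
    using fi by (subst Bochner_Integration.integral_add) (auto simp: O.prob_space)
  also have "\<dots> \<le> \<mu> * (\<rho> * real T) + (\<Sum>t<T. (\<integral>v. max (psi \<mu> v) 0 \<partial>F))"
    using Omega_round_bound[OF mu _ fm[unfolded f_def]] unfolding f_def
    by (intro add_left_mono sum_mono) auto
  also have "\<dots> = real T * Dt \<mu>" by (simp add: Dt_def algebra_simps)
  finally show ?thesis .
qed

end

context setting begin

definition Dp :: "real \<Rightarrow> real" where
  "Dp \<mu> = (\<integral>x. hp \<mu> (fst x) (snd x) \<partial>K) + \<mu> * \<rho>"

lemma hp_int: "\<mu> \<ge> 0 \<Longrightarrow> integrable K (\<lambda>x. hp \<mu> (fst x) (snd x))"
proof -
  assume mu: "\<mu> \<ge> 0"
  interpret prob_space K by (rule K_prob)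
  show ?thesis
  proof (rule integrable_const_bound[where B="vbar"])
    show "AE x in K. norm (hp \<mu> (fst x) (snd x)) \<le> vbar"
      using K_AE
    proof eventually_elim
      case (elim x)
      moreover have "\<mu> * snd x \<ge> 0" using mu elim by simp
      ultimately show ?case by (auto simp: hp_def algebra_simps)
    qed
  qed (simp add: hp_def)
qed

lemma Dp_nonneg: "\<mu> \<ge> 0 \<Longrightarrow> Dp \<mu> \<ge> 0"
  unfolding Dp_def using rho_pos by (intro add_nonneg_nonneg Bochner_Integration.integral_nonneg) (auto simp: hp_def)

context
  fixes \<epsilon> \<mu>bar \<mu>1 B :: real and T :: nat
begin

abbreviation "muO t \<omega> \<equiv> mu \<epsilon> \<rho> \<mu>bar \<mu>1 B (vals \<omega>) (bids \<omega>) t"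
abbreviation "bbO t \<omega> \<equiv> bb \<epsilon> \<rho> \<mu>bar \<mu>1 B (vals \<omega>) (bids \<omega>) t"

lemma st_meas: "t \<le> T \<Longrightarrow> muO t \<in> borel_measurable (\<Omega> T) \<and> bbO t \<in> borel_measurable (\<Omega> T)"
proof (induction t)
  case 0 then show ?case by (simp add: mu0 bb0)
next
  case (Suc t)
  then have t: "t < T" by simp
  have [measurable]: "muO t \<in> borel_measurable (\<Omega> T)" "bbO t \<in> borel_measurable (\<Omega> T)"
    using Suc by auto
  have [measurable]: "(\<lambda>\<omega>. vals \<omega> t) \<in> borel_measurable (\<Omega> T)" "(\<lambda>\<omega>. bids \<omega> t) \<in> borel_measurable (\<Omega> T)"
    using t by simp_all
  have z[measurable]: "(\<lambda>\<omega>. zz \<epsilon> \<rho> \<mu>bar \<mu>1 B (vals \<omega>) (bids \<omega>) t) \<in> borel_measurable (\<Omega> T)"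
    unfolding zz_def bid_def by measurable
  show ?case unfolding st_Suc by (intro conjI; measurable)
qed

lemma rev_meas: "(\<lambda>\<omega>. pac_revenue \<epsilon> \<rho> \<mu>bar \<mu>1 B (vals \<omega>) (bids \<omega>) T) \<in> borel_measurable (\<Omega> T)"
proof -
  have "(\<lambda>\<omega>. \<Sum>t<T. if bid \<epsilon> \<rho> \<mu>bar \<mu>1 B (vals \<omega>) (bids \<omega>) t \<ge> bids \<omega> t then vals \<omega> t - bids \<omega> t else 0) \<in> borel_measurable (\<Omega> T)"
  proof (rule borel_measurable_sum)
    fix t assume "t \<in> {..<T}"
    then have t: "t < T" by simp
    have [measurable]: "muO t \<in> borel_measurable (\<Omega> T)" "bbO t \<in> borel_measurable (\<Omega> T)"
      using st_meas[of t] t by auto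
    have [measurable]: "(\<lambda>\<omega>. vals \<omega> t) \<in> borel_measurable (\<Omega> T)" "(\<lambda>\<omega>. bids \<omega> t) \<in> borel_measurable (\<Omega> T)"
      using t by simp_all
    show "(\<lambda>\<omega>. if bid \<epsilon> \<rho> \<mu>bar \<mu>1 B (vals \<omega>) (bids \<omega>) t \<ge> bids \<omega> t then vals \<omega> t - bids \<omega> t else 0) \<in> borel_measurable (\<Omega> T)"
      unfolding bid_def by measurable
  qed
  then show ?thesis by (simp add: rev_eq)
qed

lemma rev_int: "integrable (\<Omega> T) (\<lambda>\<omega>. pac_revenue \<epsilon> \<rho> \<mu>bar \<mu>1 B (vals \<omega>) (bids \<omega>) T)"
proof -
  interpret O: prob_space "\<Omega> T" by (rule Omega_prob)
  show ?thesis
  proof (rule O.integrable_const_bound[where B="real T * vbar"])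
    show "AE x in \<Omega> T. norm (pac_revenue \<epsilon> \<rho> \<mu>bar \<mu>1 B (vals x) (bids x) T) \<le> real T * vbar"
      using Omega_AE[of T]
    proof eventually_elim
      case (elim \<omega>)
      have "\<bar>\<Sum>t<T. if bid \<epsilon> \<rho> \<mu>bar \<mu>1 B (vals \<omega>) (bids \<omega>) t \<ge> bids \<omega> t then vals \<omega> t - bids \<omega> t else 0\<bar>
          \<le> (\<Sum>t<T. \<bar>if bid \<epsilon> \<rho> \<mu>bar \<mu>1 B (vals \<omega>) (bids \<omega>) t \<ge> bids \<omega> t then vals \<omega> t - bids \<omega> t else 0\<bar>)"
        by (rule sum_abs)
      also have "\<dots> \<le> (\<Sum>t<T. vbar)"
        using elim vbar_pos by (intro sum_mono) auto
      finally show ?case by (simp add: rev_eq)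
    qed
  qed (rule rev_meas)
qed


lemma mu_rng: "0 \<le> \<mu>1 \<Longrightarrow> \<mu>1 \<le> \<mu>bar \<Longrightarrow> 0 \<le> mu \<epsilon> \<rho> \<mu>bar \<mu>1 B v p t \<and> mu \<epsilon> \<rho> \<mu>bar \<mu>1 B v p t \<le> \<mu>bar"
  by (cases t) (auto simp: mu0 st_Suc)

abbreviation "Y t \<omega> \<equiv> hp (muO t \<omega>) (vals \<omega> t) (bids \<omega> t) + muO t \<omega> * \<rho>"

lemma Y_meas: "t < T \<Longrightarrow> (\<lambda>\<omega>. Y t \<omega>) \<in> borel_measurable (\<Omega> T)"
proof -
  assume t: "t < T"
  have [measurable]: "muO t \<in> borel_measurable (\<Omega> T)"
    using st_meas[of t] t by auto
  have [measurable]: "(\<lambda>\<omega>. vals \<omega> t) \<in> borel_measurable (\<Omega> T)" "(\<lambda>\<omega>. bids \<omega> t) \<in> borel_measurable (\<Omega> T)"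
    using t by simp_all
  show ?thesis unfolding hp_def by measurable
qed

lemma Y_exp:
  assumes t: "t < T" and mu1: "0 \<le> \<mu>1" "\<mu>1 \<le> \<mu>bar" and m: "m \<ge> 0" "\<And>\<mu>. 0 \<le> \<mu> \<Longrightarrow> \<mu> \<le> \<mu>bar \<Longrightarrow> m \<le> Dp \<mu>"
  shows "integrable (\<Omega> T) (\<lambda>\<omega>. Y t \<omega>) \<and> m \<le> (\<integral>\<omega>. Y t \<omega> \<partial>\<Omega> T)"
proof -
  interpret O: prob_space "\<Omega> T" by (rule Omega_prob)
  interpret Kp: prob_space K by (rule K_prob)
  interpret P: product_prob_space "\<lambda>_::nat. R" using R_prob by (simp add: product_prob_space_def product_prob_space_axioms_def product_sigma_finite_def prob_space_imp_sigma_finite)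
  have Ym: "(\<lambda>\<omega>. Y t \<omega>) \<in> borel_measurable (\<Omega> T)" by (rule Y_meas[OF t])
  have Ynn: "Y t \<omega> \<ge> 0" for \<omega>
    using mu_rng[OF mu1, of "vals \<omega>" "bids \<omega>" t] rho_pos by (auto simp: hp_def)
  have Yint: "integrable (\<Omega> T) (\<lambda>\<omega>. Y t \<omega>)"
  proof (rule O.integrable_const_bound[where B="vbar + \<mu>bar * \<rho>"])
    show "AE x in \<Omega> T. norm (Y t x) \<le> vbar + \<mu>bar * \<rho>"
      using Omega_AE[of T]
    proof eventually_elim
      case (elim \<omega>)
      define u where "u = muO t \<omega>"
      have u: "0 \<le> u" "u \<le> \<mu>bar" using mu_rng[OF mu1, of "vals \<omega>" "bids \<omega>" t] by (auto simp: u_def)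
      have v: "0 \<le> vals \<omega> t" "vals \<omega> t \<le> vbar" "0 \<le> bids \<omega> t" using elim t by auto
      have "u * bids \<omega> t \<ge> 0" using u v by simp
      then have "hp u (vals \<omega> t) (bids \<omega> t) \<le> vbar" using v by (auto simp: hp_def algebra_simps)
      moreover have "u * \<rho> \<le> \<mu>bar * \<rho>" using u rho_pos by (intro mult_right_mono) auto
      moreover have "0 \<le> Y t \<omega>" by (rule Ynn)
      ultimately show ?case by (simp add: u_def)
    qed
  qed (rule Ym)
  define I where "I = {..<T} - {t}"
  have ins: "insert t I = {..<T}" using t by (auto simp: I_def)
  have tI: "t \<notin> I" "finite I" by (auto simp: I_def)
  have Ym': "(\<lambda>\<omega>. ennreal (Y t \<omega>)) \<in> borel_measurable (PiM (insert t I) (\<lambda>_. R))"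
    using Ym by (simp add: ins rounds_def)
  have "ennreal m \<le> (\<integral>\<^sup>+x. (\<integral>\<^sup>+y. ennreal (Y t (x(t:=y))) \<partial>R) \<partial>PiM I (\<lambda>_. R))"
  proof -
    have "(\<integral>\<^sup>+x. ennreal m \<partial>PiM I (\<lambda>_. R)) \<le> (\<integral>\<^sup>+x. (\<integral>\<^sup>+y. ennreal (Y t (x(t:=y))) \<partial>R) \<partial>PiM I (\<lambda>_. R))"
    proof (rule nn_integral_mono)
      fix x assume x: "x \<in> space (PiM I (\<lambda>_. R))"
      define u where "u = muO t x"
      have u: "0 \<le> u" "u \<le> \<mu>bar" using mu_rng[OF mu1, of "vals x" "bids x" t] by (auto simp: u_def)
      have eq: "Y t (x(t:=y)) = hp u (fst y) (fst (snd y)) + u * \<rho>" for y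
      proof -
        have "pac_state \<epsilon> \<rho> \<mu>bar \<mu>1 B (vals (x(t:=y))) (bids (x(t:=y))) t = pac_state \<epsilon> \<rho> \<mu>bar \<mu>1 B (vals x) (bids x) t"
          by (rule pac_state_local) (auto simp: vals_def bids_def)
        then show ?thesis by (simp add: u_def mu_def vals_def bids_def)
      qed
      have km: "(\<lambda>z. ennreal (hp u (fst z) (snd z) + u * \<rho>)) \<in> borel_measurable (borel \<Otimes>\<^sub>M borel)"
        unfolding hp_def by measurable
      have kint: "integrable K (\<lambda>z. hp u (fst z) (snd z) + u * \<rho>)"
        using hp_int[OF u(1)] by (intro Bochner_Integration.integrable_add integrable_const) auto
      have "(\<integral>\<^sup>+y. ennreal (Y t (x(t:=y))) \<partial>R) = (\<integral>\<^sup>+y. ennreal (hp u (fst y) (fst (snd y)) + u * \<rho>) \<partial>R)"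
        by (simp add: eq)
      also have "\<dots> = (\<integral>\<^sup>+z. ennreal (hp u (fst z) (snd z) + u * \<rho>) \<partial>K)"
        using nn_integral_R_K[OF km] by simp
      also have "\<dots> = ennreal (\<integral>z. hp u (fst z) (snd z) + u * \<rho> \<partial>K)"
        using u rho_pos by (intro nn_integral_eq_integral kint) (auto simp: hp_def)
      also have "(\<integral>z. hp u (fst z) (snd z) + u * \<rho> \<partial>K) = Dp u"
        using hp_int[OF u(1)] by (simp add: Dp_def Kp.prob_space)
      finally have "(\<integral>\<^sup>+y. ennreal (Y t (x(t:=y))) \<partial>R) = ennreal (Dp u)" .
      moreover have "ennreal m \<le> ennreal (Dp u)" using m(2)[OF u] by (rule ennreal_leI)
      ultimately show "ennreal m \<le> (\<integral>\<^sup>+y. ennreal (Y t (x(t:=y))) \<partial>R)" by simp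
    qed
    moreover have "(\<integral>\<^sup>+x. ennreal m \<partial>PiM I (\<lambda>_. R)) = ennreal m"
    proof -
      interpret PI: prob_space "PiM I (\<lambda>_. R)" using R_prob by (intro prob_space_PiM) auto
      show ?thesis by (simp add: PI.emeasure_space_1)
    qed
    ultimately show ?thesis by simp
  qed
  also have "\<dots> = (\<integral>\<^sup>+\<omega>. ennreal (Y t \<omega>) \<partial>\<Omega> T)"
    using P.product_nn_integral_insert[OF tI(2) tI(1) Ym'] by (simp add: ins rounds_def)
  also have "\<dots> = ennreal (\<integral>\<omega>. Y t \<omega> \<partial>\<Omega> T)"
    using Ynn by (intro nn_integral_eq_integral Yint) auto
  finally have "ennreal m \<le> ennreal (\<integral>\<omega>. Y t \<omega> \<partial>\<Omega> T)" .
  moreover have "0 \<le> (\<integral>\<omega>. Y t \<omega> \<partial>\<Omega> T)" using Ynn by (intro Bochner_Integration.integral_nonneg) auto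
  ultimately have "m \<le> (\<integral>\<omega>. Y t \<omega> \<partial>\<Omega> T)" by (simp add: ennreal_le_iff)
  then show ?thesis using Yint by simp
qed

lemma pac_exp_bound:
  assumes eps: "\<epsilon> > 0" "\<epsilon> * vbar \<le> 1" and mubar: "\<mu>bar \<ge> vbar / \<rho>" and mu1: "0 \<le> \<mu>1" "\<mu>1 \<le> \<mu>bar"
    and N: "N \<le> T" "\<rho> * real N + \<mu>bar / \<epsilon> + vbar \<le> B"
    and m: "m \<ge> 0" "\<And>\<mu>. 0 \<le> \<mu> \<Longrightarrow> \<mu> \<le> \<mu>bar \<Longrightarrow> m \<le> Dp \<mu>"
  shows "real N * m - \<mu>bar\<^sup>2 / (2 * \<epsilon>) - real N * \<epsilon> * vbar\<^sup>2 / 2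
     \<le> (\<integral>\<omega>. pac_revenue \<epsilon> \<rho> \<mu>bar \<mu>1 B (vals \<omega>) (bids \<omega>) T \<partial>\<Omega> T)"
proof -
  interpret O: prob_space "\<Omega> T" by (rule Omega_prob)
  have Yi: "integrable (\<Omega> T) (\<lambda>\<omega>. Y t \<omega>)" "m \<le> (\<integral>\<omega>. Y t \<omega> \<partial>\<Omega> T)" if "t < N" for t
    using Y_exp[OF _ mu1 m] that N by auto
  have "real N * m - \<mu>bar\<^sup>2 / (2 * \<epsilon>) - real N * \<epsilon> * vbar\<^sup>2 / 2
     \<le> (\<Sum>t<N. (\<integral>\<omega>. Y t \<omega> \<partial>\<Omega> T)) - \<mu>bar\<^sup>2 / (2 * \<epsilon>) - real N * \<epsilon> * vbar\<^sup>2 / 2"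
    using sum_mono[of "{..<N}" "\<lambda>_. m" "\<lambda>t. (\<integral>\<omega>. Y t \<omega> \<partial>\<Omega> T)"] Yi by simp
  also have "\<dots> = (\<integral>\<omega>. (\<Sum>t<N. Y t \<omega>) - \<mu>bar\<^sup>2 / (2 * \<epsilon>) - real N * \<epsilon> * vbar\<^sup>2 / 2 \<partial>\<Omega> T)"
  proof -
    define C where "C = \<mu>bar\<^sup>2 / (2 * \<epsilon>) + real N * \<epsilon> * vbar\<^sup>2 / 2"
    have i1: "integrable (\<Omega> T) (\<lambda>\<omega>. \<Sum>t<N. Y t \<omega>)" using Yi by (intro Bochner_Integration.integrable_sum) auto
    have "(\<integral>\<omega>. (\<Sum>t<N. Y t \<omega>) - C \<partial>\<Omega> T) = (\<integral>\<omega>. (\<Sum>t<N. Y t \<omega>) \<partial>\<Omega> T) - C"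
      using i1 by (simp add: Bochner_Integration.integral_diff O.prob_space)
    also have "(\<integral>\<omega>. (\<Sum>t<N. Y t \<omega>) \<partial>\<Omega> T) = (\<Sum>t<N. (\<integral>\<omega>. Y t \<omega> \<partial>\<Omega> T))"
      using Yi by (intro Bochner_Integration.integral_sum) auto
    finally show ?thesis by (simp add: C_def algebra_simps)
  qed
  also have "\<dots> \<le> (\<integral>\<omega>. pac_revenue \<epsilon> \<rho> \<mu>bar \<mu>1 B (vals \<omega>) (bids \<omega>) T \<partial>\<Omega> T)"
  proof (rule integral_mono_AE)
    show "integrable (\<Omega> T) (\<lambda>\<omega>. (\<Sum>t<N. Y t \<omega>) - \<mu>bar\<^sup>2 / (2 * \<epsilon>) - real N * \<epsilon> * vbar\<^sup>2 / 2)"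
      using Yi by (intro Bochner_Integration.integrable_diff Bochner_Integration.integrable_sum integrable_const) auto
    show "integrable (\<Omega> T) (\<lambda>\<omega>. pac_revenue \<epsilon> \<rho> \<mu>bar \<mu>1 B (vals \<omega>) (bids \<omega>) T)" by (rule rev_int)
    show "AE \<omega> in \<Omega> T. (\<Sum>t<N. Y t \<omega>) - \<mu>bar\<^sup>2 / (2 * \<epsilon>) - real N * \<epsilon> * vbar\<^sup>2 / 2
        \<le> pac_revenue \<epsilon> \<rho> \<mu>bar \<mu>1 B (vals \<omega>) (bids \<omega>) T"
      using Omega_AE[of T]
    proof eventually_elim
      case (elim \<omega>)
      show ?case
        by (rule pac_pathwise[of T "vals \<omega>" vbar "bids \<omega>"]) (use elim eps rho_pos rho_le mubar mu1 N in auto)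
    qed
  qed
  finally show ?thesis .
qed

end
end

lemma my_integral_strict_mono:
  fixes f g :: "'a \<Rightarrow> real"
  assumes fi: "integrable M f" and gi: "integrable M g" and le: "AE x in M. f x \<le> g x"
    and pos: "emeasure M {x\<in>space M. f x < g x} \<noteq> 0"
  shows "integral\<^sup>L M f < integral\<^sup>L M g"
proof -
  have di: "integrable M (\<lambda>x. g x - f x)" using fi gi by auto
  have nn: "AE x in M. 0 \<le> g x - f x" using le by auto
  have "integral\<^sup>L M (\<lambda>x. g x - f x) \<noteq> 0"
  proof
    assume "integral\<^sup>L M (\<lambda>x. g x - f x) = 0"
    then have "AE x in M. g x - f x = 0" using integral_nonneg_eq_0_iff_AE[OF di nn] by simp
    then have "AE x in M. \<not> (f x < g x)" by eventually_elim auto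
    moreover have "{x\<in>space M. f x < g x} \<in> sets M" using fi gi by measurable
    ultimately have "emeasure M {x\<in>space M. f x < g x} = 0"
      using AE_iff_measurable[of "{x\<in>space M. f x < g x}" M "\<lambda>x. \<not> f x < g x"] by auto
    then show False using pos by simp
  qed
  moreover have "integral\<^sup>L M (\<lambda>x. g x - f x) \<ge> 0" using di nn by (intro integral_nonneg_AE) auto
  ultimately show ?thesis using fi gi by (simp add: Bochner_Integration.integral_diff)
qed

locale setting2 = setting +
  fixes L :: real and g :: "real \<Rightarrow> real"
  assumes L_pos: "L > 0" and g_meas: "g \<in> borel_measurable lborel" and g_nn: "\<And>x. 0 \<le> g x"
    and G_eq: "G = density lborel (\<lambda>x. ennreal (g x))" and g_L: "\<And>x. x \<in> {0..vbar} \<Longrightarrow> L \<le> g x"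
    and spend: "(\<integral>vp. (if fst vp \<ge> snd vp then snd vp else 0) \<partial>(F \<Otimes>\<^sub>M G)) > \<rho>"
begin

lemma G_interval_pos:
  assumes "0 \<le> a" "a < b" "b \<le> vbar"
  shows "emeasure G {a<..<b} \<noteq> 0"
proof -
  have gm[measurable]: "g \<in> borel_measurable borel" using g_meas by simp
  have "emeasure G {a<..<b} = (\<integral>\<^sup>+x. ennreal (g x) * indicator {a<..<b} x \<partial>lborel)"
    unfolding G_eq by (rule emeasure_density) auto
  also have "\<dots> \<ge> (\<integral>\<^sup>+x. ennreal L * indicator {a<..<b} x \<partial>lborel)"
    using assms g_L by (intro nn_integral_mono) (auto simp: indicator_def intro: ennreal_leI)
  moreover have "(\<integral>\<^sup>+x. ennreal L * indicator {a<..<b} x \<partial>lborel) = ennreal L * ennreal (b - a)"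
    using assms by (simp add: nn_integral_cmult_indicator)
  moreover have "ennreal L * ennreal (b - a) \<noteq> 0" using L_pos assms by (simp add: ennreal_mult[symmetric])
  ultimately show ?thesis by (metis le_zero_eq)
qed

lemma G_pos_integral:
  fixes f :: "real \<Rightarrow> real"
  assumes fi: "integrable G f" and nn: "\<And>p. 0 \<le> f p"
    and ab: "0 \<le> a" "a < b" "b \<le> vbar" and pos: "\<And>p. p \<in> {a<..<b} \<Longrightarrow> 0 < f p"
  shows "0 < integral\<^sup>L G f"
proof -
  have "integral\<^sup>L G (\<lambda>_. 0) < integral\<^sup>L G f"
  proof (rule my_integral_strict_mono[where M=G and f="\<lambda>_. 0" and g=f])
    show "integrable G (\<lambda>_. 0::real)" by simp
    have "{a<..<b} \<subseteq> {x\<in>space G. 0 < f x}" using pos by (auto simp: space_G)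
    moreover have "{x\<in>space G. 0 < f x} \<in> sets G" using fi by measurable
    ultimately have "emeasure G {a<..<b} \<le> emeasure G {x\<in>space G. 0 < f x}"
      by (intro emeasure_mono) auto
    then show "emeasure G {x\<in>space G. 0 < f x} \<noteq> 0" using G_interval_pos[OF ab] by auto
  qed (use fi nn in auto)
  then show ?thesis by simp
qed

lemma G_no_atom: "AE p in G. p \<noteq> v"
proof -
  have gm: "(\<lambda>x. ennreal (g x)) \<in> borel_measurable lborel" using g_meas by simp
  show ?thesis unfolding G_eq using AE_lborel_singleton[of v]
    by (subst AE_density[OF gm]) (auto elim: AE_mp)
qed

lemma K_AE_pair:
  assumes "AE v in F. P v" "\<And>v. AE p in G. Q v p" "{x\<in>space K. P (fst x) \<and> Q (fst x) (snd x)} \<in> sets K"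
  shows "AE x in K. P (fst x) \<and> Q (fst x) (snd x)"
proof -
  interpret F: prob_space F by (rule F_prob)
  interpret G: prob_space G by (rule G_prob)
  interpret pair_sigma_finite F G ..
  show ?thesis
  proof (rule AE_pair_measure)
    show "{x \<in> space K. P (fst x) \<and> Q (fst x) (snd x)} \<in> sets K" by fact
    show "AE x in F. AE y in G. P (fst (x, y)) \<and> Q (fst (x, y)) (snd (x, y))"
      by (rule AE_mp[OF assms(1)], rule AE_I2) (auto intro: AE_mp[OF assms(2)] AE_I2)
  qed
qed

end

lemma max0_lip: "\<bar>max (A::real) 0 - max B 0\<bar> \<le> \<bar>A - B\<bar>"
  by (simp add: max_def abs_if)

context setting2 begin

lemma F_pos: "emeasure F {0<..vbar} \<noteq> 0"
proof
  assume z: "emeasure F {0<..vbar} = 0"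
  have "{0<..vbar} \<in> null_sets F" using z by (auto simp: null_sets_def F_sets)
  from AE_not_in[OF this] have "AE v in F. v = 0"
    using F_AE by eventually_elim auto
  then have "AE x in K. fst x = 0 \<and> snd x \<in> {0..vbar}"
    using G_AE by (intro K_AE_pair) (auto, measurable)
  then have "AE x in K. (if fst x \<ge> snd x then snd x else 0) = (0::real)"
    by eventually_elim auto
  then have "(\<integral>vp. (if fst vp \<ge> snd vp then snd vp else 0) \<partial>K) = (\<integral>vp. 0 \<partial>K)"
    by (intro integral_cong_AE) auto
  then show False using spend rho_pos by simp
qed

lemma G_sec_int:
  fixes h :: "real \<Rightarrow> real"
  assumes "h \<in> borel_measurable borel" "\<And>p. p \<in> {0..vbar} \<Longrightarrow> \<bar>h p\<bar> \<le> C"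
  shows "integrable G h"
proof -
  interpret prob_space G by (rule G_prob)
  show ?thesis
  proof (rule integrable_const_bound[where B=C])
    show "AE x in G. norm (h x) \<le> C" using G_AE by eventually_elim (use assms in auto)
  qed (use assms in simp)
qed

lemma strict_gap:
  assumes mu: "\<mu> > 0"
  shows "Dt \<mu> < Dp \<mu>"
proof -
  interpret F: prob_space F by (rule F_prob)
  interpret G: prob_space G by (rule G_prob)
  interpret pair_sigma_finite F G ..
  define Pv where "Pv v = (\<integral>p. hp \<mu> v p \<partial>G)" for v
  have mu0: "\<mu> \<ge> 0" using mu by simp
  have hpi: "integrable K (\<lambda>x. hp \<mu> (fst x) (snd x))" by (rule hp_int[OF mu0])
  have KP: "(\<integral>x. hp \<mu> (fst x) (snd x) \<partial>K) = (\<integral>v. Pv v \<partial>F)"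
    using integral_fst'[OF hpi] by (simp add: Pv_def)
  have Pveq: "Pv = (\<lambda>v. \<integral>p. hp \<mu> v p \<partial>G)" by (simp add: fun_eq_iff Pv_def)
  have Pvi: "integrable F Pv"
    using integrable_fst'[OF hpi] by (simp add: Pveq)
  have sec1: "integrable G (\<lambda>p. if p < v then v - (1 + \<mu>) * p else 0)" for v
    by (rule G_sec_int[where C="\<bar>v\<bar> + (1 + \<mu>) * vbar"])
      (use mu in \<open>auto simp: abs_mult intro!: abs_triangle_ineq4[THEN order_trans] add_mono mult_left_mono\<close>)
  have sec2: "integrable G (\<lambda>p. hp \<mu> v p)" for v
  proof (rule G_sec_int[where C="\<bar>v\<bar> + (1 + \<mu>) * vbar"])
    show "(\<lambda>p. hp \<mu> v p) \<in> borel_measurable borel" unfolding hp_def by measurable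
    fix p :: real assume p: "p \<in> {0..vbar}"
    have "\<bar>v - (1 + \<mu>) * p\<bar> \<le> \<bar>v\<bar> + (1 + \<mu>) * vbar"
      using mu p by (auto simp: abs_mult intro!: abs_triangle_ineq4[THEN order_trans] add_mono mult_left_mono)
    then show "\<bar>hp \<mu> v p\<bar> \<le> \<bar>v\<bar> + (1 + \<mu>) * vbar" by (auto simp: hp_def)
  qed
  have le: "max (psi \<mu> v) 0 \<le> Pv v" for v
  proof -
    have "psi \<mu> v \<le> Pv v" unfolding psi_def Pv_def
      by (intro integral_mono sec1 sec2) (auto simp: hp_def)
    moreover have "0 \<le> Pv v" unfolding Pv_def by (intro Bochner_Integration.integral_nonneg) (auto simp: hp_def)
    ultimately show ?thesis by simp
  qed
  have lt: "max (psi \<mu> v) 0 < Pv v" if v: "v \<in> {0<..vbar}" for v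
  proof -
    have v0: "0 < v" "v \<le> vbar" using v by auto
    have w: "v / (1 + \<mu>) < v" "0 < v / (1 + \<mu>)" using v0 mu by (auto simp: divide_less_eq)
    have "0 < (\<integral>p. hp \<mu> v p - (if p < v then v - (1 + \<mu>) * p else 0) \<partial>G)"
    proof (rule G_pos_integral[of _ "v / (1 + \<mu>)" v])
      show "integrable G (\<lambda>p. hp \<mu> v p - (if p < v then v - (1 + \<mu>) * p else 0))"
        using sec1 sec2 by auto
      show "0 \<le> hp \<mu> v p - (if p < v then v - (1 + \<mu>) * p else 0)" for p by (auto simp: hp_def)
      fix p assume p: "p \<in> {v / (1 + \<mu>)<..<v}"
      then have "v < (1 + \<mu>) * p" using mu by (auto simp: divide_less_eq mult.commute)
      then show "0 < hp \<mu> v p - (if p < v then v - (1 + \<mu>) * p else 0)" using p by (auto simp: hp_def)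
    qed (use w v0 in auto)
    then have a: "psi \<mu> v < Pv v"
      unfolding psi_def Pv_def using sec1 sec2 by (simp add: Bochner_Integration.integral_diff)
    have "0 < Pv v" unfolding Pv_def
    proof (rule G_pos_integral[OF sec2, where a=0 and b="v / (1 + \<mu>)"])
      show "0 \<le> hp \<mu> v p" for p by (simp add: hp_def)
      fix p assume p: "p \<in> {0<..<v / (1 + \<mu>)}"
      then have "(1 + \<mu>) * p < v" using mu by (auto simp: less_divide_eq mult.commute)
      then show "0 < hp \<mu> v p" by (simp add: hp_def)
    qed (use w v0 in auto)
    then show ?thesis using a by simp
  qed
  have "(\<integral>v. max (psi \<mu> v) 0 \<partial>F) < (\<integral>v. Pv v \<partial>F)"
  proof (rule my_integral_strict_mono)
    show "integrable F (\<lambda>v. max (psi \<mu> v) 0)" by (rule psi_plus_int[OF mu0])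
    show "integrable F Pv" by (rule Pvi)
    show "AE x in F. max (psi \<mu> x) 0 \<le> Pv x" using le by simp
    have "{0<..vbar} \<subseteq> {x\<in>space F. max (psi \<mu> x) 0 < Pv x}" using lt by (auto simp: space_F)
    moreover have "{x\<in>space F. max (psi \<mu> x) 0 < Pv x} \<in> sets F"
      using psi_plus_int[OF mu0] Pvi by measurable
    ultimately have "emeasure F {0<..vbar} \<le> emeasure F {x\<in>space F. max (psi \<mu> x) 0 < Pv x}"
      by (intro emeasure_mono) auto
    then show "emeasure F {x\<in>space F. max (psi \<mu> x) 0 < Pv x} \<noteq> 0" using F_pos by auto
  qed
  then show ?thesis unfolding Dt_def Dp_def KP by simp
qed

lemma Dp_lip:
  assumes "0 \<le> a" "0 \<le> b"
  shows "\<bar>Dp a - Dp b\<bar> \<le> (vbar + \<rho>) * \<bar>a - b\<bar>"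
proof -
  interpret Kp: prob_space K by (rule K_prob)
  have ia: "integrable K (\<lambda>x. hp a (fst x) (snd x))" by (rule hp_int[OF assms(1)])
  have ib: "integrable K (\<lambda>x. hp b (fst x) (snd x))" by (rule hp_int[OF assms(2)])
  have pw: "AE x in K. \<bar>hp a (fst x) (snd x) - hp b (fst x) (snd x)\<bar> \<le> \<bar>a - b\<bar> * vbar"
    using K_AE
  proof eventually_elim
    case (elim x)
    have "\<bar>hp a (fst x) (snd x) - hp b (fst x) (snd x)\<bar> \<le> \<bar>(fst x - (1 + a) * snd x) - (fst x - (1 + b) * snd x)\<bar>"
      unfolding hp_def by (rule max0_lip)
    also have "\<dots> = \<bar>(b - a) * snd x\<bar>" by (simp add: algebra_simps)
    also have "\<dots> = \<bar>a - b\<bar> * snd x" using elim by (simp add: abs_mult abs_minus_commute)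
    also have "\<dots> \<le> \<bar>a - b\<bar> * vbar" using elim by (intro mult_left_mono) auto
    finally show ?case .
  qed
  have "\<bar>(\<integral>x. hp a (fst x) (snd x) - hp b (fst x) (snd x) \<partial>K)\<bar> \<le> \<bar>a - b\<bar> * vbar"
  proof -
    have "(\<integral>x. hp a (fst x) (snd x) - hp b (fst x) (snd x) \<partial>K) \<le> (\<integral>x. \<bar>a - b\<bar> * vbar \<partial>K)"
      using pw ia ib by (intro integral_mono_AE) auto
    moreover have "(\<integral>x. - (\<bar>a - b\<bar> * vbar) \<partial>K) \<le> (\<integral>x. hp a (fst x) (snd x) - hp b (fst x) (snd x) \<partial>K)"
      using pw ia ib by (intro integral_mono_AE) auto
    ultimately show ?thesis by (simp add: Kp.prob_space abs_le_iff)
  qed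
  then have "\<bar>(\<integral>x. hp a (fst x) (snd x) \<partial>K) - (\<integral>x. hp b (fst x) (snd x) \<partial>K)\<bar> \<le> \<bar>a - b\<bar> * vbar"
    using ia ib by (simp add: Bochner_Integration.integral_diff)
  moreover have "\<bar>a * \<rho> - b * \<rho>\<bar> = \<bar>a - b\<bar> * \<rho>" using rho_pos by (simp add: abs_mult left_diff_distrib[symmetric])
  ultimately show ?thesis unfolding Dp_def by (simp add: algebra_simps abs_le_iff) linarith
qed

lemma Dp_cont: "continuous_on {0..M} Dp"
proof (rule lipschitz_on_continuous_on)
  show "(vbar + \<rho>)-lipschitz_on {0..M} Dp"
  proof (rule lipschitz_onI)
    fix x y :: real assume "x \<in> {0..M}" "y \<in> {0..M}"
    then show "dist (Dp x) (Dp y) \<le> (vbar + \<rho>) * dist x y"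
      using Dp_lip[of x y] by (simp add: dist_real_def)
  qed (use vbar_pos rho_pos in simp)
qed

end

context setting2 begin

lemma spend_strict: "(\<integral>x. (if snd x < fst x then snd x else 0) \<partial>K) > \<rho>"
proof -
  have "AE x in K. True \<and> snd x \<noteq> fst x"
    by (rule K_AE_pair) (auto intro: G_no_atom, measurable)
  then have "AE x in K. (if snd x < fst x then snd x else 0) = (if fst x \<ge> snd x then snd x else 0)"
    by eventually_elim auto
  then have "(\<integral>x. (if snd x < fst x then snd x else 0) \<partial>K) = (\<integral>x. (if fst x \<ge> snd x then snd x else 0) \<partial>K)"
    by (intro integral_cong_AE) auto
  then show ?thesis using spend by simp
qed

lemma small_delta:
  assumes M: "M > 0"
  shows "\<exists>\<delta>. 0 < \<delta> \<and> \<delta> \<le> M \<and> Dp \<delta> < Dp 0"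
proof -
  interpret Kp: prob_space K by (rule K_prob)
  define s where "s n x = (if (1 + 1 / real (Suc n)) * snd x \<le> fst x then snd x else 0)" for n and x :: "real \<times> real"
  define f where "f x = (if snd x < fst x then snd x else 0)" for x :: "real \<times> real"
  have sm[measurable]: "s n \<in> borel_measurable K" for n
    unfolding s_def by measurable
  have "(\<lambda>n. integral\<^sup>L K (s n)) \<longlonglongrightarrow> integral\<^sup>L K f"
  proof (rule integral_dominated_convergence[where w="\<lambda>_. vbar"])
    show "f \<in> borel_measurable K" unfolding f_def by measurable
    show "s n \<in> borel_measurable K" for n by simp
    show "integrable K (\<lambda>_. vbar)" by simp
    show "AE x in K. norm (s n x) \<le> vbar" for n
      using K_AE by eventually_elim (auto simp: s_def)
    show "AE x in K. (\<lambda>n. s n x) \<longlonglongrightarrow> f x"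
      using K_AE
    proof eventually_elim
      case (elim x)
      define v where "v = fst x"
      define p where "p = snd x"
      have p0: "0 \<le> p" using elim by (simp add: p_def)
      have "eventually (\<lambda>n. s n x = f x) sequentially"
      proof (cases "p < v \<and> 0 < p")
        case True
        obtain N where N: "N > 0" "inverse (real N) < (v - p) / p"
          using ex_inverse_of_nat_less[of "(v - p) / p"] True by auto
        show ?thesis
        proof (rule eventually_sequentiallyI[of N])
          fix n assume n: "N \<le> n"
          have "1 / real (Suc n) \<le> inverse (real N)"
            using n N by (simp add: divide_simps)
          then have "1 / real (Suc n) < (v - p) / p" using N by simp
          then have "1 / real (Suc n) * p < v - p" using True by (simp add: less_divide_eq)
          then have "(1 + 1 / real (Suc n)) * p \<le> v" by (simp add: algebra_simps)
          then show "s n x = f x" using True by (simp add: s_def f_def v_def[symmetric] p_def[symmetric])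
        qed
      next
        case False
        show ?thesis
        proof (rule always_eventually, rule allI)
          fix n
          show "s n x = f x"
          proof (cases "p = 0")
            case True then show ?thesis by (simp add: s_def f_def p_def[symmetric])
          next
            case False
            with p0 have pp: "p > 0" by simp
            with \<open>\<not> (p < v \<and> 0 < p)\<close> have "v \<le> p" by simp
            moreover have "p < (1 + 1 / real (Suc n)) * p" using pp by (simp add: algebra_simps)
            ultimately show ?thesis by (simp add: s_def f_def p_def[symmetric] v_def[symmetric])
          qed
        qed
      qed
      then show ?case by (rule tendsto_eventually)
    qed
  qed
  moreover have "f = (\<lambda>x. if snd x < fst x then snd x else 0)" by (simp add: fun_eq_iff f_def)
  then have "integral\<^sup>L K f > \<rho>" using spend_strict by simp
  ultimately have ev1: "eventually (\<lambda>n. integral\<^sup>L K (s n) > \<rho>) sequentially"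
    by (rule order_tendstoD(1))
  have "(\<lambda>n. 1 / real (Suc n)) \<longlonglongrightarrow> 0" by (rule LIMSEQ_Suc[OF lim_const_over_n])
  then have ev2: "eventually (\<lambda>n. 1 / real (Suc n) < M) sequentially"
    using M by (rule order_tendstoD(2))
  obtain n where n1: "integral\<^sup>L K (s n) > \<rho>" and n2: "1 / real (Suc n) < M"
  proof -
    from eventually_conj[OF ev1 ev2] obtain N where "\<And>n. n \<ge> N \<Longrightarrow> integral\<^sup>L K (s n) > \<rho> \<and> 1 / real (Suc n) < M"
      by (auto simp: eventually_sequentially)
    then show ?thesis using that by blast
  qed
  define \<delta> where "\<delta> = 1 / real (Suc n)"
  have d0: "0 < \<delta>" by (simp add: \<delta>_def)
  have sd: "s n x = (if (1 + \<delta>) * snd x \<le> fst x then snd x else 0)" for x by (simp add: s_def \<delta>_def)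
  have si: "integrable K (s n)"
    by (rule Kp.integrable_const_bound[where B=vbar]) (use K_AE in \<open>eventually_elim, auto simp: s_def\<close>)
  have pw: "AE x in K. hp \<delta> (fst x) (snd x) \<le> hp 0 (fst x) (snd x) - \<delta> * s n x"
    using K_AE
  proof eventually_elim
    case (elim x)
    have p0: "0 \<le> snd x" using elim by simp
    show ?case
    proof (cases "(1 + \<delta>) * snd x \<le> fst x")
      case True
      then have "fst x - snd x \<ge> \<delta> * snd x" by (simp add: algebra_simps)
      moreover have "\<delta> * snd x \<ge> 0" using d0 p0 by simp
      ultimately show ?thesis using True by (simp add: hp_def sd algebra_simps)
    next
      case False
      have "(1 + \<delta>) * snd x \<ge> snd x" using d0 p0 by (simp add: algebra_simps)
      then show ?thesis using False by (simp add: hp_def sd max_def)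
    qed
  qed
  have "(\<integral>x. hp \<delta> (fst x) (snd x) \<partial>K) \<le> (\<integral>x. hp 0 (fst x) (snd x) - \<delta> * s n x \<partial>K)"
    using pw hp_int[of \<delta>] hp_int[of 0] si d0 by (intro integral_mono_AE) auto
  also have "\<dots> = (\<integral>x. hp 0 (fst x) (snd x) \<partial>K) - \<delta> * integral\<^sup>L K (s n)"
    using hp_int[of 0] si by (simp add: Bochner_Integration.integral_diff)
  finally have "Dp \<delta> \<le> Dp 0 - \<delta> * integral\<^sup>L K (s n) + \<delta> * \<rho>" by (simp add: Dp_def)
  moreover have "\<delta> * \<rho> < \<delta> * integral\<^sup>L K (s n)" using n1 d0 by simp
  ultimately have "Dp \<delta> < Dp 0" by linarith
  moreover have "\<delta> \<le> M" using n2 by (simp add: \<delta>_def)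
  ultimately show ?thesis using d0 by blast
qed

lemma gap_exists:
  assumes M: "M > 0"
  shows "\<exists>\<mu>0 m. \<mu>0 \<ge> 0 \<and> m \<ge> 0 \<and> (\<forall>\<mu>. 0 \<le> \<mu> \<longrightarrow> \<mu> \<le> M \<longrightarrow> m \<le> Dp \<mu>) \<and> Dt \<mu>0 < m"
proof -
  obtain x where x: "x \<in> {0..M}" "\<And>y. y \<in> {0..M} \<Longrightarrow> Dp x \<le> Dp y"
    using continuous_attains_inf[OF compact_Icc _ Dp_cont[of M]] M by auto
  have "x \<noteq> 0"
  proof
    assume "x = 0"
    obtain \<delta> where "0 < \<delta>" "\<delta> \<le> M" "Dp \<delta> < Dp 0" using small_delta[OF M] by auto
    then show False using x(2)[of \<delta>] \<open>x = 0\<close> by auto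
  qed
  then have "x > 0" using x by auto
  then have "Dt x < Dp x" by (rule strict_gap)
  moreover have "Dp x \<ge> 0" using x by (intro Dp_nonneg) auto
  ultimately show ?thesis using x by (intro exI[of _ x] exI[of _ "Dp x"]) auto
qed

end

lemma final_arith:
  fixes T s \<epsilon> m D \<delta> N a1 a2 vbar \<rho> \<mu>bar C0 C1 :: real
  assumes s: "s \<ge> 1" "s * s = T" and eps: "\<epsilon> > 0" "\<epsilon> \<le> a2 / s" "1 / \<epsilon> \<le> s / a1"
    and a: "a1 > 0" "a2 > 0" and m: "m \<ge> 0" and d: "\<delta> = m - D" "\<delta> > 0"
    and r: "\<rho> > 0" "\<mu>bar \<ge> 0" "vbar > 0"
    and N: "N \<ge> T - (vbar + \<mu>bar / \<epsilon>) / \<rho> - 1" "N \<le> T" "N \<ge> 0"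
    and C: "C1 = \<mu>bar * m / (\<rho> * a1) + \<mu>bar\<^sup>2 / (2 * a1) + a2 * vbar\<^sup>2 / 2" "C0 = (vbar / \<rho> + 1) * m"
    and big: "s \<ge> 4 * C1 / \<delta>" "T \<ge> 4 * C0 / \<delta>"
  shows "\<delta> / 2 * T \<le> N * m - \<mu>bar\<^sup>2 / (2 * \<epsilon>) - N * \<epsilon> * vbar\<^sup>2 / 2 - T * D"
proof -
  have h1: "N * m \<ge> (T - (vbar + \<mu>bar / \<epsilon>) / \<rho> - 1) * m" using N m by (intro mult_right_mono) auto
  have e1: "(T - (vbar + \<mu>bar / \<epsilon>) / \<rho> - 1) * m = T * m - (vbar / \<rho> + 1) * m - (\<mu>bar * m / \<rho>) * (1 / \<epsilon>)"
    using r by (simp add: field_simps)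
  have h2: "(\<mu>bar * m / \<rho>) * (1 / \<epsilon>) \<le> (\<mu>bar * m / \<rho>) * (s / a1)"
    using eps r m by (intro mult_left_mono) auto
  have h3: "\<mu>bar\<^sup>2 / (2 * \<epsilon>) \<le> (\<mu>bar\<^sup>2 / 2) * (s / a1)"
  proof -
    have "\<mu>bar\<^sup>2 / (2 * \<epsilon>) = (\<mu>bar\<^sup>2 / 2) * (1 / \<epsilon>)" by simp
    also have "\<dots> \<le> (\<mu>bar\<^sup>2 / 2) * (s / a1)" using eps by (intro mult_left_mono) auto
    finally show ?thesis .
  qed
  have h4: "N * \<epsilon> * vbar\<^sup>2 / 2 \<le> s * (a2 * vbar\<^sup>2 / 2)"
  proof -
    have "N * \<epsilon> * vbar\<^sup>2 / 2 \<le> T * \<epsilon> * vbar\<^sup>2 / 2" using N eps by (intro divide_right_mono mult_right_mono) auto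
    also have "\<dots> \<le> T * (a2 / s) * vbar\<^sup>2 / 2" using eps s by (intro divide_right_mono mult_right_mono mult_left_mono) auto
    also have "\<dots> = s * (a2 * vbar\<^sup>2 / 2)" using s by (simp add: field_simps)
    finally show ?thesis .
  qed
  have C1nn: "C1 \<ge> 0" using C r a m by (simp add: mult_nonneg_nonneg)
  have h5: "C1 * s \<le> \<delta> * T / 4"
  proof -
    have "4 * C1 \<le> s * \<delta>" using big(1) d(2) by (simp add: divide_le_eq)
    then have "C1 \<le> \<delta> * s / 4" by (simp add: algebra_simps)
    then have "C1 * s \<le> (\<delta> * s / 4) * s" using s by (intro mult_right_mono) auto
    then show ?thesis using s by (simp add: algebra_simps)
  qed
  have h6: "C0 \<le> \<delta> * T / 4"
  proof -
    have "4 * C0 \<le> T * \<delta>" using big(2) d(2) by (simp add: divide_le_eq)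
    then show ?thesis by (simp add: algebra_simps)
  qed
  have eqC1: "(\<mu>bar * m / \<rho>) * (s / a1) + (\<mu>bar\<^sup>2 / 2) * (s / a1) + s * (a2 * vbar\<^sup>2 / 2) = C1 * s"
    using a r unfolding C(1) by (simp add: field_simps)
  have dT: "\<delta> * T = T * m - T * D" by (simp add: d(1) algebra_simps)
  have dT2: "\<delta> / 2 * T = \<delta> * T / 2" by simp
  show ?thesis using h1 e1 h2 h3 h4 h5 h6 eqC1 C(2) dT dT2 by linarith
qed

lemma sqrt_ge_of_sq: "(x::real)\<^sup>2 \<le> T \<Longrightarrow> x \<le> sqrt T"
  by (metis abs_ge_self order_trans real_sqrt_abs real_sqrt_le_mono)

theorem theorem8:
  fixes F G :: "real measure" and vbar \<rho> L a1 a2 \<mu>bar \<mu>1 :: real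
    and eps :: "nat \<Rightarrow> real" and full :: bool
  assumes vbar_pos: "vbar > 0" and rho_pos: "0 < \<rho>" and rho_le: "\<rho> \<le> vbar"
    and F_prob: "prob_space F" and F_sets: "sets F = sets borel"
    and F_supp: "measure F {0..vbar} = 1"
    and G_prob: "prob_space G" and G_sets: "sets G = sets borel"
    and G_supp: "measure G {0..vbar} = 1"
    and L_pos: "L > 0"
    and G_dens: "\<exists>g. g \<in> borel_measurable lborel \<and> (\<forall>x. 0 \<le> g x)
                   \<and> G = density lborel (\<lambda>x. ennreal (g x)) \<and> (\<forall>x\<in>{0..vbar}. L \<le> g x)"
    and ratio: "\<forall>lam>0. measure F {v\<in>{0<..vbar}. rfun G v / cfun G v \<noteq> lam} > 0"
    and spend: "(\<integral>vp. (if fst vp \<ge> snd vp then snd vp else 0) \<partial>(F \<Otimes>\<^sub>M G)) > \<rho>"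
    and a_pos: "a1 > 0" "a2 > 0"
    and eps_order: "\<forall>T\<ge>1. a1 / sqrt (real T) \<le> eps T \<and> eps T \<le> a2 / sqrt (real T)"
    and mubar: "\<mu>bar \<ge> vbar / \<rho>" and mu1: "0 \<le> \<mu>1" "\<mu>1 \<le> \<mu>bar"
  shows "\<exists>C1>0. \<exists>C2>0. \<exists>T0::nat. \<forall>T\<ge>T0.
           C1 * real T \<le> pac_exp eps \<rho> \<mu>bar \<mu>1 F G T - thr_opt full F G \<rho> T \<and>
           pac_exp eps \<rho> \<mu>bar \<mu>1 F G T - thr_opt full F G \<rho> T \<le> C2 * real T"
proof -
  obtain g where g: "g \<in> borel_measurable lborel" "\<And>x. 0 \<le> g x" "G = density lborel (\<lambda>x. ennreal (g x))"
    "\<And>x. x \<in> {0..vbar} \<Longrightarrow> L \<le> g x"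
    using G_dens by blast
  interpret S: setting2 F G vbar \<rho> L g
    by (rule setting2.intro[OF setting.intro[OF vbar_pos rho_pos rho_le F_prob F_sets F_supp G_prob G_sets G_supp]
        setting2_axioms.intro[OF L_pos g(1) g(2) g(3) g(4) spend]])
  have mubar_pos: "\<mu>bar > 0" using mubar vbar_pos rho_pos by (smt (verit) divide_pos_pos)
  obtain \<mu>0 m where gap: "\<mu>0 \<ge> 0" "m \<ge> 0" "\<And>\<mu>. 0 \<le> \<mu> \<Longrightarrow> \<mu> \<le> \<mu>bar \<Longrightarrow> m \<le> S.Dp \<mu>" "S.Dt \<mu>0 < m"
    using S.gap_exists[OF mubar_pos] by blast
  define \<delta> where "\<delta> = m - S.Dt \<mu>0"
  have d0: "\<delta> > 0" using gap by (simp add: \<delta>_def)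
  define C1 where "C1 = \<mu>bar * m / (\<rho> * a1) + \<mu>bar\<^sup>2 / (2 * a1) + a2 * vbar\<^sup>2 / 2"
  define C0 where "C0 = (vbar / \<rho> + 1) * m"
  have C1nn: "C1 \<ge> 0" using gap mubar_pos a_pos rho_pos by (simp add: C1_def)
  have C0nn: "C0 \<ge> 0" using gap vbar_pos rho_pos by (simp add: C0_def)
  define X where "X = 1 + (4 * C1 / \<delta>)\<^sup>2 + (a2 * vbar)\<^sup>2 + (2 * \<mu>bar / (\<rho> * a1))\<^sup>2 + 4 * C0 / \<delta> + 2 * vbar / \<rho>"
  define T0 where "T0 = nat \<lceil>X\<rceil>"
  have thr_feas0: "thr_feasible full (\<lambda>_ _ _ _. False) (\<rho> * real T) T" for T
    using rho_pos by (simp add: thr_feasible_def thr_payment_def thr_x_def)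
  have thr0: "(\<integral>\<omega>. thr_revenue full (\<lambda>_ _ _ _. False) (vals \<omega>) (bids \<omega>) (gams \<omega>) T \<partial>rounds F G T) = 0" for T
    by (simp add: thr_revenue_def thr_x_def)
  have thr_le: "thr_opt full F G \<rho> T \<le> real T * S.Dt \<mu>0" for T
    unfolding thr_opt_def
  proof (rule cSup_least)
    show "(\<lambda>\<beta>. \<integral>\<omega>. thr_revenue full \<beta> (vals \<omega>) (bids \<omega>) (gams \<omega>) T \<partial>rounds F G T) ` {\<beta>. thr_feasible full \<beta> (\<rho> * real T) T} \<noteq> {}"
      using thr_feas0[of T] by blast
  qed (use S.thr_bound[OF gap(1)] in auto)
  have thr_ge: "0 \<le> thr_opt full F G \<rho> T" for T
    unfolding thr_opt_def
  proof (rule cSup_upper)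
    show "0 \<in> (\<lambda>\<beta>. \<integral>\<omega>. thr_revenue full \<beta> (vals \<omega>) (bids \<omega>) (gams \<omega>) T \<partial>rounds F G T) ` {\<beta>. thr_feasible full \<beta> (\<rho> * real T) T}"
      using thr_feas0[of T] thr0[of T] by (auto intro!: image_eqI[where x="\<lambda>_ _ _ _. False"])
    show "bdd_above ((\<lambda>\<beta>. \<integral>\<omega>. thr_revenue full \<beta> (vals \<omega>) (bids \<omega>) (gams \<omega>) T \<partial>rounds F G T) ` {\<beta>. thr_feasible full \<beta> (\<rho> * real T) T})"
      using S.thr_bound[OF gap(1)] by (intro bdd_aboveI[where M="real T * S.Dt \<mu>0"]) auto
  qed
  have pac_up: "pac_exp eps \<rho> \<mu>bar \<mu>1 F G T \<le> vbar * real T" for T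
    unfolding pac_exp_def
  proof (rule integral_le_const_prob)
    show "prob_space (rounds F G T)" by (rule S.Omega_prob)
    show "0 \<le> vbar * real T" using vbar_pos by simp
    show "AE x in rounds F G T. pac_revenue (eps T) \<rho> \<mu>bar \<mu>1 (\<rho> * real T) (vals x) (bids x) T \<le> vbar * real T"
      using S.Omega_AE[of T]
    proof eventually_elim
      case (elim \<omega>)
      have "pac_revenue (eps T) \<rho> \<mu>bar \<mu>1 (\<rho> * real T) (vals \<omega>) (bids \<omega>) T \<le> (\<Sum>t<T. vbar)"
        unfolding rev_eq using elim by (intro sum_mono) auto
      then show ?case by (simp add: mult.commute)
    qed
  qed
  show ?thesis
  proof (rule exI[of _ "\<delta> / 2"], rule conjI, use d0 in simp, rule exI[of _ vbar], rule conjI, use vbar_pos in simp,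
      rule exI[of _ T0], intro allI impI conjI)
    fix T :: nat assume T: "T0 \<le> T"
    show "pac_exp eps \<rho> \<mu>bar \<mu>1 F G T - thr_opt full F G \<rho> T \<le> vbar * real T"
      using pac_up[of T] thr_ge[of T] by simp
    have TX: "real T \<ge> X" using T unfolding T0_def by linarith
    have sq: "(4 * C1 / \<delta>)\<^sup>2 \<ge> 0" "(a2 * vbar)\<^sup>2 \<ge> 0" "(2 * \<mu>bar / (\<rho> * a1))\<^sup>2 \<ge> 0"
      "4 * C0 / \<delta> \<ge> 0" "2 * vbar / \<rho> \<ge> 0" using C0nn d0 vbar_pos rho_pos by auto
    have T1: "real T \<ge> 1" using TX sq unfolding X_def by linarith
    define s where "s = sqrt (real T)"
    have s1: "s \<ge> 1" using T1 by (simp add: s_def)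
    have ss: "s * s = real T" using T1 by (simp add: s_def)
    have "(4 * C1 / \<delta>)\<^sup>2 \<le> real T" using TX sq unfolding X_def by linarith
    then have sC1: "s \<ge> 4 * C1 / \<delta>" unfolding s_def by (rule sqrt_ge_of_sq)
    have "(a2 * vbar)\<^sup>2 \<le> real T" using TX sq unfolding X_def by linarith
    then have sa2: "s \<ge> a2 * vbar" unfolding s_def by (rule sqrt_ge_of_sq)
    have "(2 * \<mu>bar / (\<rho> * a1))\<^sup>2 \<le> real T" using TX sq unfolding X_def by linarith
    then have smu: "s \<ge> 2 * \<mu>bar / (\<rho> * a1)" unfolding s_def by (rule sqrt_ge_of_sq)
    have TC0: "real T \<ge> 4 * C0 / \<delta>" using TX sq unfolding X_def by linarith
    have Tv: "real T \<ge> 2 * vbar / \<rho>" using TX sq unfolding X_def by linarith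
    define \<epsilon> where "\<epsilon> = eps T"
    have T1n: "T \<ge> 1" using T1 by simp
    have e1: "a1 / s \<le> \<epsilon>" "\<epsilon> \<le> a2 / s" using eps_order T1n unfolding \<epsilon>_def s_def by auto
    have epos: "\<epsilon> > 0" using e1 a_pos s1 by (smt (verit) divide_pos_pos)
    have einv: "1 / \<epsilon> \<le> s / a1"
    proof -
      have "a1 / s > 0" using a_pos s1 by simp
      have "0 < \<epsilon> * (a1 / s)" by (rule mult_pos_pos) fact+
      then have "1 / \<epsilon> \<le> 1 / (a1 / s)" by (rule divide_left_mono[OF e1(1) zero_le_one])
      then show ?thesis by simp
    qed
    have evbar: "\<epsilon> * vbar \<le> 1"
    proof -
      have "\<epsilon> * vbar \<le> (a2 / s) * vbar" using e1 vbar_pos by (intro mult_right_mono) auto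
      also have "\<dots> \<le> 1" using sa2 s1 by (simp add: field_simps)
      finally show ?thesis .
    qed
    define inner where "inner = real T - (vbar + \<mu>bar / \<epsilon>) / \<rho>"
    have inner0: "inner \<ge> 0"
    proof -
      have "\<mu>bar / \<epsilon> = \<mu>bar * (1 / \<epsilon>)" by simp
      also have "\<dots> \<le> \<mu>bar * (s / a1)" using einv mubar_pos by (intro mult_left_mono) auto
      also have "\<dots> \<le> \<rho> * real T / 2"
      proof -
        have "2 * \<mu>bar \<le> s * (\<rho> * a1)" using smu rho_pos a_pos by (simp add: divide_le_eq)
        then have "\<mu>bar * (s / a1) \<le> (s * (\<rho> * a1) / 2) * (s / a1)" using s1 a_pos by (intro mult_right_mono) auto
        also have "\<dots> = \<rho> * (s * s) / 2" using a_pos by (simp add: field_simps)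
        finally show ?thesis using ss by simp
      qed
      finally have a: "\<mu>bar / \<epsilon> \<le> \<rho> * real T / 2" .
      have b: "vbar \<le> \<rho> * real T / 2" using Tv rho_pos by (simp add: divide_le_eq mult.commute)
      have c0: "vbar + \<mu>bar / \<epsilon> \<le> \<rho> * real T" using a b by linarith
      have c: "vbar + \<mu>bar / \<epsilon> \<le> real T * \<rho>" using c0 by (simp only: mult.commute)
      have "(vbar + \<mu>bar / \<epsilon>) / \<rho> \<le> real T" by (rule pos_divide_le_eq[OF rho_pos, THEN iffD2, OF c])
      then show ?thesis by (simp add: inner_def)
    qed
    define N where "N = nat \<lfloor>inner\<rfloor>"
    have N1: "real N \<le> inner" "real N \<ge> inner - 1" using inner0 by (auto simp: N_def)
    have N2: "N \<le> T"
    proof -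
      have "inner \<le> real T" using rho_pos vbar_pos mubar_pos epos by (simp add: inner_def)
      then show ?thesis using N1 by linarith
    qed
    have N3: "\<rho> * real N + \<mu>bar / \<epsilon> + vbar \<le> \<rho> * real T"
    proof -
      have "\<rho> * real N \<le> \<rho> * inner" using N1 rho_pos by simp
      also have "\<dots> = \<rho> * real T - (vbar + \<mu>bar / \<epsilon>)" using rho_pos by (simp add: inner_def field_simps)
      finally show ?thesis by simp
    qed
    have pac_lo: "real N * m - \<mu>bar\<^sup>2 / (2 * \<epsilon>) - real N * \<epsilon> * vbar\<^sup>2 / 2 \<le> pac_exp eps \<rho> \<mu>bar \<mu>1 F G T"
      unfolding pac_exp_def \<epsilon>_def[symmetric]
      by (rule S.pac_exp_bound[OF epos evbar mubar mu1 N2 N3 gap(2) gap(3)])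
    have fN: "real N \<ge> real T - (vbar + \<mu>bar / \<epsilon>) / \<rho> - 1" using N1(2) unfolding inner_def .
    have fN2: "real N \<le> real T" using N2 by simp
    have fN3: "real N \<ge> 0" by simp
    have mubar_nn: "\<mu>bar \<ge> 0" using mubar_pos by simp
    have fa: "\<delta> / 2 * real T \<le> real N * m - \<mu>bar\<^sup>2 / (2 * \<epsilon>) - real N * \<epsilon> * vbar\<^sup>2 / 2 - real T * S.Dt \<mu>0"
      by (rule final_arith[OF s1 ss epos e1(2) einv a_pos gap(2) \<delta>_def d0 rho_pos mubar_nn vbar_pos fN fN2 fN3 C1_def C0_def sC1 TC0])
    show "\<delta> / 2 * real T \<le> pac_exp eps \<rho> \<mu>bar \<mu>1 F G T - thr_opt full F G \<rho> T"
      using fa pac_lo thr_le[of T] by linarith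
  qed
qed

end
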